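(* Fix an agent $i$ and let $\gamma^{i}\ge 0$ be a $\mathbb{G}^{i}$-progressively measurable process, locally integrable pathwise. Suppose that $\gamma^{i}-r$ is (pathwise) increasing and that Condition (C) holds for $\gamma^i$. Then $$\tau^{i}:=\inf\{t:\ \gamma^{i}_{t}-r_{t}\ge 0\}$$ belongs to $\mathcal{T}^{i}$ and is a solution of agent $i$'s optimal stopping problem $$\sup_{\tau\in\mathcal{T}^{i}} E\Big[\exp\Big(\int_{0}^{\tau} r_{s}\,ds\Big)\mathbf{1}_{\{\theta^{i}>\tau\}\cup\{\theta^{i}=\infty\}}\Big].$$ If the value of this problem is finite, then $\tau^{i}$ is the minimal element among all solutions; if moreover $\gamma^{i}-r$ is strictly increasing, then $\tau^{i}$ is the unique solution.
   Context: Let $(\Omega,\mathcal F,P)$ be a probability space. For each agent $i$ in an index set $I$, let $\mathbb G^i=(\mathcal G^i_t)_{t\ge0}$ be a right-continuous filtration on it, and let $\mathcal E$ be an exponentially distributed random variable with mean $1$ which is independent of $\mathcal G^i_\infty$ for every $i\in I$. $\mathcal T^i$ denotes the set of all $\mathbb G^i$-stopping times (with values in $[0,\infty]$). Let $r$ be a real-valued process, locally integrable pathwise (Lebesgue-integrable on bounded intervals), which is $\mathbb G^i$-progressively measurable for every $i$. For a process $\gamma^i\ge0$ (the default intensity of agent $i$), set $\theta^{i}=\inf\{t:\ \int_0^t\gamma^i_s\,ds=\mathcal E\}$. Convention: $\int_0^\infty r_s\,ds:=-\infty$ if $\int_0^\infty r_s^+ds=\int_0^\infty r^-_s ds=\infty$.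 Condition (C) for $\gamma^i$: either $r^+$ is integrable on $[0,\infty)$ $P$-a.s., or $\inf\{t:\ \gamma^i_t-r_t\ge0\}<\infty$ $P$-a.s. "Increasing" means non-decreasing; "strictly increasing" means strictly. *)

theory Defs
  imports "HOL-Probability.Probability"
begin

definition right_cont_filtration :: "'a measure \<Rightarrow> (real \<Rightarrow> 'a measure) \<Rightarrow> bool" where
  "right_cont_filtration M G \<longleftrightarrow>
     (\<forall>t. space (G t) = space M \<and> sets (G t) \<subseteq> sets M) \<and>
     (\<forall>s t. 0 \<le> s \<longrightarrow> s \<le> t \<longrightarrow> sets (G s) \<subseteq> sets (G t)) \<and>
     (\<forall>t\<ge>0. sets (G t) = (\<Inter>s\<in>{t<..}. sets (G s)))"

definition Ginf :: "'a measure \<Rightarrow> (real \<Rightarrow> 'a measure) \<Rightarrow> 'a set set" where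
  "Ginf M G = sigma_sets (space M) (\<Union>t\<in>{0..}. sets (G t))"

definition stopping_time_inf :: "'a measure \<Rightarrow> (real \<Rightarrow> 'a measure) \<Rightarrow> ('a \<Rightarrow> ereal) \<Rightarrow> bool" where
  "stopping_time_inf M G T \<longleftrightarrow>
     (\<forall>x\<in>space M. 0 \<le> T x) \<and> (\<forall>t\<ge>0. {x\<in>space M. T x \<le> ereal t} \<in> sets (G t))"

definition progressive :: "(real \<Rightarrow> 'a measure) \<Rightarrow> (real \<Rightarrow> 'a \<Rightarrow> real) \<Rightarrow> bool" where
  "progressive G X \<longleftrightarrow>
     (\<forall>t\<ge>0. (\<lambda>(s, x). X s x) \<in> borel_measurable (restrict_space lborel {0..t} \<Otimes>\<^sub>M G t))"

definition loc_int_pathwise :: "'a measure \<Rightarrow> (real \<Rightarrow> 'a \<Rightarrow> real) \<Rightarrow> bool" where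
  "loc_int_pathwise M X \<longleftrightarrow> (\<forall>x\<in>space M. \<forall>t\<ge>0. set_integrable lborel {0..t} (\<lambda>s. X s x))"

(* int_0^T r_s ds for T in [0,oo], with the convention int_0^oo r := -oo when both
   int r^+ and int r^- are infinite *)
definition cum_int :: "(real \<Rightarrow> 'a \<Rightarrow> real) \<Rightarrow> 'a \<Rightarrow> ereal \<Rightarrow> ereal" where
  "cum_int r x T =
    (if T = \<infinity> then
       (let P = (\<integral>\<^sup>+ s\<in>{0..}. ennreal (max 0 (r s x)) \<partial>lborel);
            N = (\<integral>\<^sup>+ s\<in>{0..}. ennreal (max 0 (- r s x)) \<partial>lborel)
        in if P = \<infinity> \<and> N = \<infinity> then - \<infinity> else enn2ereal P - enn2ereal N)
     else ereal (\<integral>s\<in>{0..real_of_ereal T}. r s x \<partial>lborel))"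

definition exp_ext :: "ereal \<Rightarrow> ennreal" where
  "exp_ext z = (if z = \<infinity> then \<infinity> else if z = - \<infinity> then 0 else ennreal (exp (real_of_ereal z)))"

(* default time theta = inf{t : int_0^t gamma = E}  (inf {} = oo) *)
definition default_time :: "(real \<Rightarrow> 'a \<Rightarrow> real) \<Rightarrow> ('a \<Rightarrow> real) \<Rightarrow> 'a \<Rightarrow> ereal" where
  "default_time \<gamma> E x = Inf {ereal t | t. 0 \<le> t \<and> (\<integral>s\<in>{0..t}. \<gamma> s x \<partial>lborel) = E x}"

definition payoff :: "'a measure \<Rightarrow> (real \<Rightarrow> 'a \<Rightarrow> real) \<Rightarrow> ('a \<Rightarrow> ereal) \<Rightarrow> ('a \<Rightarrow> ereal) \<Rightarrow> ennreal" where
  "payoff M r \<theta> T = (\<integral>\<^sup>+ x. exp_ext (cum_int r x (T x)) *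
       indicator {x. \<theta> x > T x \<or> \<theta> x = \<infinity>} x \<partial>M)"

definition optimal_stopping :: "'a measure \<Rightarrow> (real \<Rightarrow> 'a measure) \<Rightarrow> (real \<Rightarrow> 'a \<Rightarrow> real) \<Rightarrow> ('a \<Rightarrow> ereal) \<Rightarrow> ('a \<Rightarrow> ereal) \<Rightarrow> bool" where
  "optimal_stopping M G r \<theta> T \<longleftrightarrow> stopping_time_inf M G T \<and>
     (\<forall>S. stopping_time_inf M G S \<longrightarrow> payoff M r \<theta> S \<le> payoff M r \<theta> T)"

definition value_os :: "'a measure \<Rightarrow> (real \<Rightarrow> 'a measure) \<Rightarrow> (real \<Rightarrow> 'a \<Rightarrow> real) \<Rightarrow> ('a \<Rightarrow> ereal) \<Rightarrow> ennreal" where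
  "value_os M G r \<theta> = (SUP S\<in>{S. stopping_time_inf M G S}. payoff M r \<theta> S)"

end

theory Submission
  imports Defs "HOL-Probability.Probability"
begin


definition wfW :: "ennreal \<Rightarrow> ennreal \<Rightarrow> ereal" where
  "wfW p b = (if b = \<infinity> then -\<infinity> else enn2ereal p - enn2ereal b)"

definition CIf :: "ennreal \<Rightarrow> ennreal \<Rightarrow> ereal" where
  "CIf p n = (if p = \<infinity> \<and> n = \<infinity> then -\<infinity> else enn2ereal p - enn2ereal n)"

definition Qf :: "ennreal \<Rightarrow> ennreal" where
  "Qf a = (if a = \<infinity> then 0 else ennreal (exp (- enn2real a)))"

lemma fin_enn: "(x::ennreal) \<noteq> \<infinity> \<Longrightarrow> (\<And>X. x = ennreal X \<Longrightarrow> 0 \<le> X \<Longrightarrow> P) \<Longrightarrow> P"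
  by (cases x rule: ennreal_cases) auto

lemma wf_ennreal: "0 \<le> x \<Longrightarrow> 0 \<le> y \<Longrightarrow> wfW (ennreal x) (ennreal y) = ereal (x - y)"
  by (simp add: wfW_def)

lemma wf_top2: "wfW p \<infinity> = -\<infinity>" "wfW p top = -\<infinity>" by (simp_all add: wfW_def)
lemma wf_top1: "b \<noteq> \<infinity> \<Longrightarrow> wfW \<infinity> b = \<infinity>"
  by (erule fin_enn) (simp add: wfW_def)
lemma wf_top1': "b \<noteq> top \<Longrightarrow> wfW top b = \<infinity>"
  using wf_top1[of b] by simp

lemma wf_le1:
  assumes "p' \<le> b'" shows "wfW (p + p') (b + b') \<le> wfW p b"
proof (cases "b + b' = \<infinity>")
  case True then show ?thesis by (simp only: True wf_top2) simp
next
  case False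
  then have b: "b \<noteq> \<infinity>" "b' \<noteq> \<infinity>" by auto
  with assms have p': "p' \<noteq> \<infinity>" by (auto simp: top_unique)
  show ?thesis
  proof (cases "p = \<infinity>")
    case True then show ?thesis using False b by (simp add: wf_top1')
  next
    case pf: False
    obtain P where P: "p = ennreal P" "0 \<le> P" using pf by (rule fin_enn)
    obtain P' where P': "p' = ennreal P'" "0 \<le> P'" using p' by (rule fin_enn)
    obtain B where B: "b = ennreal B" "0 \<le> B" using b(1) by (rule fin_enn)
    obtain B' where B': "b' = ennreal B'" "0 \<le> B'" using b(2) by (rule fin_enn)
    have "P' \<le> B'" using assms P' B' by simp
    then show ?thesis using P P' B B'
      by (simp add: ennreal_plus[symmetric] wf_ennreal del: ennreal_plus)
  qed
qed

lemma wf_le2: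
  assumes "b' \<le> p'" "b + b' \<noteq> \<infinity>" shows "wfW p b \<le> wfW (p + p') (b + b')"
proof -
  have b: "b \<noteq> \<infinity>" "b' \<noteq> \<infinity>" using assms by auto
  show ?thesis
  proof (cases "p + p' = \<infinity>")
    case True then show ?thesis using assms(2) by (simp only: True wf_top1[OF assms(2)]) simp
  next
    case False
    then have pp: "p \<noteq> \<infinity>" "p' \<noteq> \<infinity>" by auto
    obtain P where P: "p = ennreal P" "0 \<le> P" using pp(1) by (rule fin_enn)
    obtain P' where P': "p' = ennreal P'" "0 \<le> P'" using pp(2) by (rule fin_enn)
    obtain B where B: "b = ennreal B" "0 \<le> B" using b(1) by (rule fin_enn)
    obtain B' where B': "b' = ennreal B'" "0 \<le> B'" using b(2) by (rule fin_enn)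
    have "B' \<le> P'" using assms P' B' by simp
    then show ?thesis using P P' B B'
      by (simp add: ennreal_plus[symmetric] wf_ennreal del: ennreal_plus)
  qed
qed

lemma wf_less1:
  assumes "b' < p'" "b + b' \<noteq> \<infinity>" "p \<noteq> \<infinity>" shows "wfW p b < wfW (p + p') (b + b')"
proof -
  have b: "b \<noteq> \<infinity>" "b' \<noteq> \<infinity>" using assms by auto
  obtain P where P: "p = ennreal P" "0 \<le> P" using assms(3) by (rule fin_enn)
  obtain B where B: "b = ennreal B" "0 \<le> B" using b(1) by (rule fin_enn)
  obtain B' where B': "b' = ennreal B'" "0 \<le> B'" using b(2) by (rule fin_enn)
  show ?thesis
  proof (cases "p' = \<infinity>")
    case True
    have "p + p' = \<infinity>" using True by simp
    then have "wfW (p+p') (b+b') = \<infinity>" unfolding \<open>p + p' = \<infinity>\<close> using wf_top1 assms(2) by simp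
    then show ?thesis using P B by (simp add: wf_ennreal)
  next
    case False
    obtain P' where P': "p' = ennreal P'" "0 \<le> P'" using False by (rule fin_enn)
    have "B' < P'" using assms P' B' by (simp add: ennreal_less_iff)
    then show ?thesis using P P' B B'
      by (simp add: ennreal_plus[symmetric] wf_ennreal del: ennreal_plus)
  qed
qed

lemma wf_less2:
  assumes "p' \<le> b'" "b + b' \<noteq> \<infinity> \<Longrightarrow> p' < b'" "b \<noteq> \<infinity>" "p \<noteq> \<infinity>"
  shows "wfW (p + p') (b + b') < wfW p b"
proof -
  obtain P where P: "p = ennreal P" "0 \<le> P" using assms(4) by (rule fin_enn)
  obtain B where B: "b = ennreal B" "0 \<le> B" using assms(3) by (rule fin_enn)
  show ?thesis
  proof (cases "b + b' = \<infinity>")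
    case True then show ?thesis using P B by (simp only: True wf_top2) (simp add: wf_ennreal)
  next
    case False
    then have b': "b' \<noteq> \<infinity>" by auto
    with assms have "p' \<noteq> \<infinity>" by (auto simp: top_unique)
    then obtain P' where P': "p' = ennreal P'" "0 \<le> P'" by (rule fin_enn)
    obtain B' where B': "b' = ennreal B'" "0 \<le> B'" using b' by (rule fin_enn)
    have "P' < B'" using assms(2)[OF False] P' B' by (simp add: ennreal_less_iff)
    then show ?thesis using P P' B B'
      by (simp add: ennreal_plus[symmetric] wf_ennreal del: ennreal_plus)
  qed
qed

lemma exp_ext_mono: "a \<le> b \<Longrightarrow> exp_ext a \<le> exp_ext b"
  by (cases a; cases b) (auto simp: exp_ext_def ennreal_leI)

lemma exp_ext_strict: "a < b \<Longrightarrow> exp_ext a < exp_ext b"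
  by (cases a; cases b) (auto simp: exp_ext_def ennreal_less_iff)

lemma exp_ext_CIf_Qf: "exp_ext (CIf p n) * Qf g = exp_ext (wfW p (n + g))"
proof (cases "g = \<infinity>")
  case True then show ?thesis by (simp add: Qf_def wfW_def exp_ext_def)
next
  case gf: False
  obtain Gv where G: "g = ennreal Gv" "0 \<le> Gv" using gf by (rule fin_enn)
  show ?thesis
  proof (cases "n = \<infinity>")
    case True
    have "exp_ext (CIf p n) = 0"
    proof (cases "p = \<infinity>")
      case False
      then obtain P where "p = ennreal P" "0 \<le> P" by (rule fin_enn)
      then show ?thesis using True by (simp add: CIf_def exp_ext_def)
    qed (simp add: True CIf_def exp_ext_def)
    then show ?thesis using True by (simp add: wfW_def exp_ext_def)
  next
    case nf: False
    obtain Nv where Nn: "n = ennreal Nv" "0 \<le> Nv" using nf by (rule fin_enn)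
    show ?thesis
    proof (cases "p = \<infinity>")
      case True then show ?thesis using G Nn
        by (simp add: Qf_def wfW_def CIf_def exp_ext_def ennreal_mult_top ennreal_plus[symmetric] del: ennreal_plus)
    next
      case False
      obtain P where P: "p = ennreal P" "0 \<le> P" using False by (rule fin_enn)
      have "exp (P - Nv) * exp (- Gv) = exp (P - (Nv + Gv))" by (simp add: mult_exp_exp)
      then show ?thesis using P G Nn
        by (simp add: Qf_def wfW_def CIf_def exp_ext_def ennreal_plus[symmetric] ennreal_mult[symmetric]
             del: ennreal_plus)
    qed
  qed
qed


definition Iv :: "ereal \<Rightarrow> real set" where "Iv T = {s. 0 \<le> s \<and> ereal s \<le> T}"
definition Jv :: "ereal \<Rightarrow> ereal \<Rightarrow> real set" where "Jv a b = {s. a < ereal s \<and> ereal s \<le> b}"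
definition ip :: "(real \<Rightarrow> ennreal) \<Rightarrow> real set \<Rightarrow> ennreal" where
  "ip f X = (\<integral>\<^sup>+ s. f s * indicator X s \<partial>lborel)"
definition fP :: "(real \<Rightarrow> real) \<Rightarrow> real \<Rightarrow> ennreal" where "fP r s = ennreal (max 0 (r s))"
definition fB :: "(real \<Rightarrow> real) \<Rightarrow> (real \<Rightarrow> real) \<Rightarrow> real \<Rightarrow> ennreal" where
  "fB r g s = ennreal (max 0 (- r s)) + ennreal (g s)"
definition Wp :: "(real \<Rightarrow> real) \<Rightarrow> (real \<Rightarrow> real) \<Rightarrow> ereal \<Rightarrow> ereal" where
  "Wp r g T = wfW (ip (fP r) (Iv T)) (ip (fB r g) (Iv T))"
definition tauf :: "(real \<Rightarrow> real) \<Rightarrow> (real \<Rightarrow> real) \<Rightarrow> ereal" where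
  "tauf r g = Inf {ereal t | t. 0 \<le> t \<and> 0 \<le> g t - r t}"

lemma Iv_meas[measurable]: "Iv T \<in> sets borel"
proof -
  have "Iv T = {s\<in>space borel. 0 \<le> s \<and> ereal s \<le> T}" by (simp add: Iv_def)
  also have "\<dots> \<in> sets borel" by measurable
  finally show ?thesis .
qed

lemma Jv_meas[measurable]: "Jv a b \<in> sets borel"
proof -
  have "Jv a b = {s\<in>space borel. a < ereal s \<and> ereal s \<le> b}" by (simp add: Jv_def)
  also have "\<dots> \<in> sets borel" by measurable
  finally show ?thesis .
qed

lemma Iv_meas_l[measurable]: "Iv T \<in> sets lborel" by simp
lemma Jv_meas_l[measurable]: "Jv a b \<in> sets lborel" by simp

lemma ereal_gt_pos: "0 \<le> (a::ereal) \<Longrightarrow> a < ereal s \<Longrightarrow> 0 < s"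
proof -
  assume "0 \<le> a" "a < ereal s"
  then have "(0::ereal) < ereal s" by (rule order.strict_trans1)
  then show ?thesis by simp
qed

lemma ip_split:
  assumes f[measurable]: "f \<in> borel_measurable borel" and "0 \<le> a" "a \<le> b"
  shows "ip f (Iv b) = ip f (Iv a) + ip f (Jv a b)"
proof -
  have eq: "f s * indicator (Iv b) s = f s * indicator (Iv a) s + f s * indicator (Jv a b) s" for s
  proof (cases "a < ereal s")
    case True
    have "0 < s" by (rule ereal_gt_pos[OF assms(2) True])
    then show ?thesis using True assms by (auto simp: Iv_def Jv_def indicator_def)
  next
    case False
    have "ereal s \<le> b" using False assms(3) by (meson not_less order_trans)
    then show ?thesis using False by (auto simp: Iv_def Jv_def indicator_def not_less)
  qed
  have "ip f (Iv b) = (\<integral>\<^sup>+ s. f s * indicator (Iv a) s + f s * indicator (Jv a b) s \<partial>lborel)"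
    unfolding ip_def by (intro nn_integral_cong) (rule eq)
  also have "\<dots> = ip f (Iv a) + ip f (Jv a b)" unfolding ip_def
    by (rule nn_integral_add) measurable
  finally show ?thesis .
qed

lemma tau_nonneg: "0 \<le> tauf r g"
  unfolding tauf_def by (rule Inf_greatest) auto

lemma tau_before: "0 \<le> s \<Longrightarrow> ereal s < tauf r g \<Longrightarrow> g s - r s < 0"
proof (rule ccontr)
  assume "0 \<le> s" "ereal s < tauf r g" "\<not> g s - r s < 0"
  then have "tauf r g \<le> ereal s" unfolding tauf_def by (intro Inf_lower) auto
  with \<open>ereal s < tauf r g\<close> show False by simp
qed

lemma tau_after:
  assumes mono: "mono_on {0..} (\<lambda>t. g t - r t)" and "0 \<le> s" "tauf r g < ereal s"
  shows "0 \<le> g s - r s"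
proof -
  from assms(3) obtain d where d: "d \<in> {ereal t | t. 0 \<le> t \<and> 0 \<le> g t - r t}" "d < ereal s"
    unfolding tauf_def by (auto simp: Inf_less_iff)
  then obtain t where t: "d = ereal t" "0 \<le> t" "0 \<le> g t - r t" by auto
  with d have "t \<le> s" by simp
  with mono t \<open>0 \<le> s\<close> have "g t - r t \<le> g s - r s" by (auto simp: mono_on_def)
  with t show ?thesis by simp
qed

lemma tau_after_strict:
  assumes mono: "strict_mono_on {0..} (\<lambda>t. g t - r t)" and "0 \<le> s" "tauf r g < ereal s"
  shows "0 < g s - r s"
proof -
  have m: "mono_on {0..} (\<lambda>t. g t - r t)" using mono by (rule strict_mono_on_imp_mono_on)
  obtain c where c: "tauf r g = ereal c" "0 \<le> c" using tau_nonneg[of r g] assms(3)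
    by (cases "tauf r g") auto
  define u where "u = (c + s) / 2"
  have "c < s" using c assms by simp
  then have u: "c < u" "u < s" "0 \<le> u" using c by (auto simp: u_def)
  have "0 \<le> g u - r u" using tau_after[OF m, of u] u c by simp
  also have "g u - r u < g s - r s" using mono u assms(2) by (auto simp: strict_mono_on_def)
  finally show ?thesis .
qed

lemma fB_less_fP: "0 \<le> g s \<Longrightarrow> g s - r s < 0 \<Longrightarrow> fB r g s < fP r s"
  by (simp add: fB_def fP_def ennreal_less_iff)

lemma fP_le_fB: "0 \<le> g s \<Longrightarrow> 0 \<le> g s - r s \<Longrightarrow> fP r s \<le> fB r g s"
  by (cases "0 \<le> r s") (auto simp: fB_def fP_def ennreal_plus[symmetric] simp del: ennreal_plus intro!: ennreal_leI)

lemma fP_less_fB: "0 \<le> g s \<Longrightarrow> 0 < g s - r s \<Longrightarrow> fP r s < fB r g s"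
  by (cases "0 \<le> r s") (auto simp: fB_def fP_def ennreal_plus[symmetric] ennreal_less_iff simp del: ennreal_plus)

lemma interval_not_null:
  fixes t u :: real
  assumes "t < u" "AE s in lborel. s \<notin> {t<..<u}"
  shows False
proof -
  from assms(2) obtain N where N: "{s \<in> space lborel. \<not> s \<notin> {t<..<u}} \<subseteq> N" "emeasure lborel N = 0" "N \<in> sets lborel"
    by (rule AE_E)
  then have "{t<..<u} \<subseteq> N" by auto
  then have "emeasure lborel {t<..<u} \<le> emeasure lborel N" by (intro emeasure_mono) (use N in auto)
  with N have "emeasure lborel {t<..<u} = 0" by auto
  with assms(1) show False by simp
qed



lemma AE_ne_ereal: "AE s in lborel. ereal s \<noteq> (c::ereal)"
proof (cases c)
  case (real x)
  show ?thesis using AE_lborel_singleton[of x] by eventually_elim (simp add: real)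
qed auto

locale pathw =
  fixes r g :: "real \<Rightarrow> real"
  assumes rm[measurable]: "r \<in> borel_measurable borel"
    and gm[measurable]: "g \<in> borel_measurable borel"
    and gpos: "\<And>s. 0 \<le> s \<Longrightarrow> 0 \<le> g s"
    and mono: "mono_on {0..} (\<lambda>t. g t - r t)"
    and finP: "\<And>t. 0 \<le> t \<Longrightarrow> ip (fP r) (Iv (ereal t)) \<noteq> \<infinity>"
    and finB: "\<And>t. 0 \<le> t \<Longrightarrow> ip (fB r g) (Iv (ereal t)) \<noteq> \<infinity>"
begin

lemma fPm[measurable]: "fP r \<in> borel_measurable borel" unfolding fP_def by measurable
lemma fBm[measurable]: "fB r g \<in> borel_measurable borel" unfolding fB_def by measurable

lemma Wp_split:
  assumes "0 \<le> a" "a \<le> b"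
  shows "Wp r g b = wfW (ip (fP r) (Iv a) + ip (fP r) (Jv a b)) (ip (fB r g) (Iv a) + ip (fB r g) (Jv a b))"
  unfolding Wp_def using ip_split[OF fPm assms] ip_split[OF fBm assms] by simp

lemma below_tau:
  "ip (fB r g) (Jv a (tauf r g)) \<le> ip (fP r) (Jv a (tauf r g))" if "0 \<le> a"
  unfolding ip_def
proof (rule nn_integral_mono_AE)
  show "AE s in lborel. fB r g s * indicator (Jv a (tauf r g)) s \<le> fP r s * indicator (Jv a (tauf r g)) s"
    using AE_ne_ereal[of "tauf r g"]
  proof eventually_elim
    case (elim s)
    show ?case
    proof (cases "s \<in> Jv a (tauf r g)")
      case True
      then have as: "a < ereal s" and st: "ereal s \<le> tauf r g" by (simp_all add: Jv_def)
      have "ereal s < tauf r g" using st elim by (simp add: order.order_iff_strict)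
      moreover have "0 < s" by (rule ereal_gt_pos[OF that as])
      ultimately have "ereal s < tauf r g" "0 \<le> s" by simp_all
      then have "fB r g s < fP r s" using tau_before gpos fB_less_fP by blast
      then show ?thesis by (simp add: True)
    qed simp
  qed
qed

lemma above_tau:
  "ip (fP r) (Jv (tauf r g) b) \<le> ip (fB r g) (Jv (tauf r g) b)"
  unfolding ip_def
proof (rule nn_integral_mono)
  fix s
  show "fP r s * indicator (Jv (tauf r g) b) s \<le> fB r g s * indicator (Jv (tauf r g) b) s"
  proof (cases "s \<in> Jv (tauf r g) b")
    case True
    then have "tauf r g < ereal s" by (simp add: Jv_def)
    moreover then have "0 < s" by (rule ereal_gt_pos[OF tau_nonneg[of r g]])
    then have "0 \<le> s" by simp
    ultimately have "fP r s \<le> fB r g s" using tau_after[OF mono] gpos fP_le_fB by blast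
    then show ?thesis by (simp add: True)
  qed simp
qed

end


context pathw begin

lemma ip_mono_set: "X \<subseteq> Y \<Longrightarrow> ip f X \<le> ip f Y"
  unfolding ip_def by (intro nn_integral_mono) (auto simp: indicator_def)

lemma finB_tau:
  assumes good: "tauf r g < \<infinity> \<or> ip (fP r) (Iv \<infinity>) \<noteq> \<infinity>"
  shows "ip (fB r g) (Iv (tauf r g)) \<noteq> \<infinity>"
proof (cases "tauf r g")
  case (real c)
  then have "0 \<le> c" using tau_nonneg[of r g] by simp
  then show ?thesis using finB[of c] real by simp
next
  case PInf
  have "ip (fB r g) (Iv \<infinity>) \<le> ip (fP r) (Iv \<infinity>)"
    unfolding ip_def
  proof (rule nn_integral_mono)
    fix s show "fB r g s * indicator (Iv \<infinity>) s \<le> fP r s * indicator (Iv \<infinity>) s"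
    proof (cases "0 \<le> s")
      case True
      then have "g s - r s < 0" using tau_before[of s r g] PInf by simp
      then have "fB r g s < fP r s" using fB_less_fP gpos True by blast
      then show ?thesis by (simp add: Iv_def True)
    qed (simp add: Iv_def)
  qed
  moreover have "ip (fP r) (Iv \<infinity>) \<noteq> \<infinity>" using good PInf by simp
  ultimately have "ip (fB r g) (Iv \<infinity>) < top"
    using le_less_trans[of "ip (fB r g) (Iv \<infinity>)" "ip (fP r) (Iv \<infinity>)" top] by (simp add: less_top[symmetric])
  then show ?thesis using PInf by simp
next
  case MInf then show ?thesis using tau_nonneg[of r g] by simp
qed

theorem PW1:
  assumes good: "tauf r g < \<infinity> \<or> ip (fP r) (Iv \<infinity>) \<noteq> \<infinity>" and T: "0 \<le> T"
  shows "Wp r g T \<le> Wp r g (tauf r g)"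
proof -
  let ?t = "tauf r g"
  consider "T < ?t" | "T = ?t" | "?t < T" using less_linear[of T ?t] by blast
  then show ?thesis
  proof cases
    case 1
    have "Wp r g ?t = wfW (ip (fP r) (Iv T) + ip (fP r) (Jv T ?t)) (ip (fB r g) (Iv T) + ip (fB r g) (Jv T ?t))"
      using Wp_split[OF T less_imp_le[OF 1]] by simp
    also have "\<dots> \<ge> Wp r g T" unfolding Wp_def
    proof (rule wf_le2)
      show "ip (fB r g) (Jv T ?t) \<le> ip (fP r) (Jv T ?t)" by (rule below_tau[OF T])
      show "ip (fB r g) (Iv T) + ip (fB r g) (Jv T ?t) \<noteq> \<infinity>"
        using finB_tau[OF good] ip_split[OF fBm T less_imp_le[OF 1]] by simp
    qed
    finally show ?thesis .
  next
    case 2 then show ?thesis by simp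
  next
    case 3
    have t0: "0 \<le> ?t" by (rule tau_nonneg)
    have "Wp r g T = wfW (ip (fP r) (Iv ?t) + ip (fP r) (Jv ?t T)) (ip (fB r g) (Iv ?t) + ip (fB r g) (Jv ?t T))"
      using Wp_split[OF t0 less_imp_le[OF 3]] by simp
    also have "\<dots> \<le> Wp r g ?t" unfolding Wp_def
      by (rule wf_le1) (rule above_tau)
    finally show ?thesis .
  qed
qed

end


context pathw begin

lemma below_tau_AE:
  "AE s in lborel. fB r g s * indicator (Jv a (tauf r g)) s \<le> fP r s * indicator (Jv a (tauf r g)) s" if "0 \<le> a"
  using AE_ne_ereal[of "tauf r g"]
proof eventually_elim
  case (elim s)
  show ?case
  proof (cases "s \<in> Jv a (tauf r g)")
    case True
    then have as: "a < ereal s" and st: "ereal s \<le> tauf r g" by (simp_all add: Jv_def)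
    have "ereal s < tauf r g" using st elim by (simp add: order.order_iff_strict)
    moreover have "0 < s" by (rule ereal_gt_pos[OF that as])
    ultimately have "fB r g s < fP r s" using tau_before gpos fB_less_fP less_imp_le by blast
    then show ?thesis by (simp add: True)
  qed simp
qed

lemma above_tau_pt:
  "fP r s * indicator (Jv (tauf r g) b) s \<le> fB r g s * indicator (Jv (tauf r g) b) s"
proof (cases "s \<in> Jv (tauf r g) b")
  case True
  then have ts: "tauf r g < ereal s" by (simp add: Jv_def)
  have "0 < s" by (rule ereal_gt_pos[OF tau_nonneg[of r g] ts])
  then have "fP r s \<le> fB r g s" using tau_after[OF mono _ ts] gpos fP_le_fB less_imp_le by blast
  then show ?thesis by (simp add: True)
qed simp

theorem PW2:
  assumes good: "tauf r g < \<infinity> \<or> ip (fP r) (Iv \<infinity>) \<noteq> \<infinity>" and T: "0 \<le> T" and lt: "T < tauf r g"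
  shows "Wp r g T < Wp r g (tauf r g)"
proof -
  let ?t = "tauf r g"
  obtain t where Tt: "T = ereal t" "0 \<le> t" using T lt by (cases T) auto
  define u where "u = (if ?t = \<infinity> then t + 1 else real_of_ereal ?t)"
  have tu: "t < u" "ereal u \<le> ?t"
    using lt Tt tau_nonneg[of r g] by (cases ?t; auto simp: u_def)+
  have sp: "ip (fB r g) (Iv ?t) = ip (fB r g) (Iv T) + ip (fB r g) (Jv T ?t)"
    by (rule ip_split[OF fBm T less_imp_le[OF lt]])
  have "Wp r g ?t = wfW (ip (fP r) (Iv T) + ip (fP r) (Jv T ?t)) (ip (fB r g) (Iv T) + ip (fB r g) (Jv T ?t))"
    using Wp_split[OF T less_imp_le[OF lt]] by simp
  also have "\<dots> > Wp r g T" unfolding Wp_def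
  proof (rule wf_less1)
    show "ip (fB r g) (Iv T) + ip (fB r g) (Jv T ?t) \<noteq> \<infinity>"
      using finB_tau[OF good] sp by simp
    show "ip (fP r) (Iv T) \<noteq> \<infinity>" using finP Tt by simp
    show "ip (fB r g) (Jv T ?t) < ip (fP r) (Jv T ?t)" unfolding ip_def
    proof (rule nn_integral_less)
      show "(\<lambda>s. fB r g s * indicator (Jv T ?t) s) \<in> borel_measurable lborel" by measurable
      show "(\<lambda>s. fP r s * indicator (Jv T ?t) s) \<in> borel_measurable lborel" by measurable
      have "ip (fB r g) (Jv T ?t) \<le> ip (fB r g) (Iv ?t)" using sp by simp
      then show "(\<integral>\<^sup>+ s. fB r g s * indicator (Jv T ?t) s \<partial>lborel) \<noteq> \<infinity>"
        using finB_tau[OF good] unfolding ip_def by (auto simp: top_unique)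
      show "AE s in lborel. fB r g s * indicator (Jv T ?t) s \<le> fP r s * indicator (Jv T ?t) s"
        by (rule below_tau_AE[OF T])
      show "\<not> (AE s in lborel. fP r s * indicator (Jv T ?t) s \<le> fB r g s * indicator (Jv T ?t) s)"
      proof
        assume "AE s in lborel. fP r s * indicator (Jv T ?t) s \<le> fB r g s * indicator (Jv T ?t) s"
        then have "AE s in lborel. s \<notin> {t<..<u}"
        proof eventually_elim
          case (elim s)
          show ?case
          proof
            assume s: "s \<in> {t<..<u}"
            then have "ereal s < ereal u" by simp
            then have "ereal s < ?t" using tu(2) by (rule less_le_trans)
            moreover have "0 \<le> s" using s Tt by simp
            ultimately have "fB r g s < fP r s" using tau_before gpos fB_less_fP by blast
            moreover have "s \<in> Jv T ?t" using s Tt \<open>ereal s < ?t\<close> by (auto simp: Jv_def)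
            ultimately show False using elim by simp
          qed
        qed
        then show False using interval_not_null tu(1) by blast
      qed
    qed
  qed
  finally show ?thesis .
qed

theorem PW3:
  assumes sm: "strict_mono_on {0..} (\<lambda>t. g t - r t)" and lt: "tauf r g < T"
  shows "Wp r g T < Wp r g (tauf r g)"
proof -
  let ?t = "tauf r g"
  have t0: "0 \<le> ?t" by (rule tau_nonneg)
  obtain c where tc: "?t = ereal c" "0 \<le> c" using t0 lt by (cases ?t) auto
  define u where "u = (if T = \<infinity> then c + 1 else real_of_ereal T)"
  have cu: "c < u" "ereal u \<le> T"
    using lt tc by (cases T; auto simp: u_def)+
  have "Wp r g T = wfW (ip (fP r) (Iv ?t) + ip (fP r) (Jv ?t T)) (ip (fB r g) (Iv ?t) + ip (fB r g) (Jv ?t T))"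
    using Wp_split[OF t0 less_imp_le[OF lt]] by simp
  also have "\<dots> < Wp r g ?t" unfolding Wp_def
  proof (rule wf_less2)
    show "ip (fP r) (Jv ?t T) \<le> ip (fB r g) (Jv ?t T)" by (rule above_tau)
    show "ip (fB r g) (Iv ?t) \<noteq> \<infinity>" using finB tc by simp
    show "ip (fP r) (Iv ?t) \<noteq> \<infinity>" using finP tc by simp
    assume fin: "ip (fB r g) (Iv ?t) + ip (fB r g) (Jv ?t T) \<noteq> \<infinity>"
    show "ip (fP r) (Jv ?t T) < ip (fB r g) (Jv ?t T)" unfolding ip_def
    proof (rule nn_integral_less)
      show "(\<lambda>s. fB r g s * indicator (Jv ?t T) s) \<in> borel_measurable lborel" by measurable
      show "(\<lambda>s. fP r s * indicator (Jv ?t T) s) \<in> borel_measurable lborel" by measurable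
      have "ip (fP r) (Jv ?t T) \<le> ip (fB r g) (Jv ?t T)" by (rule above_tau)
      moreover have "ip (fB r g) (Jv ?t T) \<noteq> \<infinity>" using fin by simp
      ultimately show "(\<integral>\<^sup>+ s. fP r s * indicator (Jv ?t T) s \<partial>lborel) \<noteq> \<infinity>"
        unfolding ip_def by (auto simp: top_unique)
      show "AE s in lborel. fP r s * indicator (Jv ?t T) s \<le> fB r g s * indicator (Jv ?t T) s"
        by (intro AE_I2 above_tau_pt)
      show "\<not> (AE s in lborel. fB r g s * indicator (Jv ?t T) s \<le> fP r s * indicator (Jv ?t T) s)"
      proof
        assume "AE s in lborel. fB r g s * indicator (Jv ?t T) s \<le> fP r s * indicator (Jv ?t T) s"
        then have "AE s in lborel. s \<notin> {c<..<u}"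
        proof eventually_elim
          case (elim s)
          show ?case
          proof
            assume s: "s \<in> {c<..<u}"
            then have ts: "?t < ereal s" using tc by simp
            have "0 \<le> s" using s tc by simp
            then have "fP r s < fB r g s" using tau_after_strict[OF sm _ ts] gpos fP_less_fB by blast
            moreover have "ereal s \<le> ereal u" using s by simp
            then have "ereal s \<le> T" using cu(2) by (rule order_trans)
            then have "s \<in> Jv ?t T" using ts by (simp add: Jv_def)
            ultimately show False using elim by simp
          qed
        qed
        then show False using interval_not_null cu(1) by blast
      qed
    qed
  qed
  finally show ?thesis .
qed

end


lemma Iv_ereal: "Iv (ereal t) = {0..t}" by (auto simp: Iv_def)
lemma Iv_inf: "Iv \<infinity> = {0..}" by (auto simp: Iv_def)

lemma ip_mono_set': "X \<subseteq> Y \<Longrightarrow> ip f X \<le> ip f Y"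
  unfolding ip_def by (intro nn_integral_mono) (auto simp: indicator_def)

definition Gmf :: "(real \<Rightarrow> real) \<Rightarrow> real \<Rightarrow> real" where "Gmf g t = (\<integral>s\<in>{0..t}. g s \<partial>lborel)"

locale thpath =
  fixes g :: "real \<Rightarrow> real"
  assumes gm[measurable]: "g \<in> borel_measurable borel"
    and gpos: "\<And>s. 0 \<le> s \<Longrightarrow> 0 \<le> g s"
    and loc: "\<And>t. 0 \<le> t \<Longrightarrow> set_integrable lborel {0..t} g"
begin

abbreviation Gm :: "real \<Rightarrow> real" where "Gm \<equiv> Gmf g"

lemma ip_G: "0 \<le> t \<Longrightarrow> ip (\<lambda>s. ennreal (g s)) (Iv (ereal t)) = ennreal (Gm t)"
proof -
  assume t: "0 \<le> t"
  have "ip (\<lambda>s. ennreal (g s)) (Iv (ereal t)) = (\<integral>\<^sup>+ s. ennreal (indicator {0..t} s *\<^sub>R g s) \<partial>lborel)"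
    unfolding ip_def Iv_ereal by (intro nn_integral_cong) (auto simp: indicator_def)
  also have "\<dots> = ennreal (\<integral>s. indicator {0..t} s *\<^sub>R g s \<partial>lborel)"
    using loc[OF t] gpos unfolding set_integrable_def
    by (intro nn_integral_eq_integral) (auto simp: indicator_def)
  also have "\<dots> = ennreal (Gm t)" by (simp add: Gmf_def set_lebesgue_integral_def)
  finally show ?thesis .
qed

lemma Gm_nonneg: "0 \<le> t \<Longrightarrow> 0 \<le> Gm t"
  unfolding Gmf_def set_lebesgue_integral_def
  by (rule integral_nonneg_AE) (auto simp: indicator_def intro: gpos)

lemma Gm_mono: "0 \<le> s \<Longrightarrow> s \<le> t \<Longrightarrow> Gm s \<le> Gm t"
proof -
  assume st: "0 \<le> s" "s \<le> t"
  have "ennreal (Gm s) = ip (\<lambda>s. ennreal (g s)) (Iv (ereal s))" using ip_G[of s] st by simp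
  also have "\<dots> \<le> ip (\<lambda>s. ennreal (g s)) (Iv (ereal t))" using st by (intro ip_mono_set') (auto simp: Iv_def)
  also have "\<dots> = ennreal (Gm t)" using ip_G[of t] st by simp
  finally have "ennreal (Gm s) \<le> ennreal (Gm t)" .
  then show ?thesis using Gm_nonneg[of t] st by (simp add: ennreal_le_iff)
qed

lemma Gm_0: "Gm 0 = 0"
proof -
  have "ip (\<lambda>s. ennreal (g s)) (Iv (ereal 0)) = 0" unfolding ip_def Iv_ereal
    using AE_lborel_singleton[of 0] by (subst nn_integral_0_iff_AE) (auto elim!: eventually_mono)
  then have "ennreal (Gm 0) = 0" using ip_G[of 0] by simp
  then show ?thesis using Gm_nonneg[of 0] by simp
qed

lemma Gm_cont: "0 \<le> b \<Longrightarrow> continuous_on {0..b} Gm"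
proof -
  assume b: "0 \<le> b"
  have "continuous_on {0..b} (\<lambda>x. integral {0..x} g)"
    using set_borel_integral_eq_integral(1)[OF loc[OF b]] by (rule indefinite_integral_continuous_1)
  moreover have "\<And>x. x \<in> {0..b} \<Longrightarrow> Gm x = integral {0..x} g"
    unfolding Gmf_def using set_borel_integral_eq_integral(2)[OF loc] by auto
  ultimately show ?thesis using continuous_on_eq[of "{0..b}" "\<lambda>x. integral {0..x} g" Gm] by auto
qed

lemma ip_inf_SUP: "ip (\<lambda>s. ennreal (g s)) (Iv \<infinity>) = (SUP n::nat. ip (\<lambda>s. ennreal (g s)) (Iv (ereal (real n))))"
proof -
  have "ip (\<lambda>s. ennreal (g s)) (Iv \<infinity>) = (\<integral>\<^sup>+ s. (SUP n::nat. ennreal (g s) * indicator (Iv (ereal (real n))) s) \<partial>lborel)"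
    unfolding ip_def
  proof (intro nn_integral_cong)
    fix s
    show "ennreal (g s) * indicator (Iv \<infinity>) s = (SUP n::nat. ennreal (g s) * indicator (Iv (ereal (real n))) s)"
    proof (cases "0 \<le> s")
      case True
      show ?thesis
      proof (rule antisym)
        have "s \<le> real (nat \<lceil>s\<rceil>)" by linarith
        then have "ennreal (g s) * indicator (Iv (ereal (real (nat \<lceil>s\<rceil>)))) s = ennreal (g s)"
          using True by (simp add: Iv_def)
        moreover have "ennreal (g s) * indicator (Iv (ereal (real (nat \<lceil>s\<rceil>)))) s \<le> (SUP n::nat. ennreal (g s) * indicator (Iv (ereal (real n))) s)"
          by (rule SUP_upper) simp
        ultimately show "ennreal (g s) * indicator (Iv \<infinity>) s \<le> (SUP n::nat. ennreal (g s) * indicator (Iv (ereal (real n))) s)"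
          using True by (simp add: Iv_def)
        show "(SUP n::nat. ennreal (g s) * indicator (Iv (ereal (real n))) s) \<le> ennreal (g s) * indicator (Iv \<infinity>) s"
          by (rule SUP_least) (auto simp: Iv_def indicator_def)
      qed
    qed (simp add: Iv_def)
  qed
  also have "\<dots> = (SUP n::nat. ip (\<lambda>s. ennreal (g s)) (Iv (ereal (real n))))"
    unfolding ip_def
  proof (rule nn_integral_monotone_convergence_SUP)
    show "incseq (\<lambda>n s. ennreal (g s) * indicator (Iv (ereal (real n))) s)"
      by (intro monoI le_funI) (auto simp: Iv_def indicator_def)
  qed measurable
  finally show ?thesis .
qed

lemma theta_char:
  fixes e :: real and T :: ereal
  assumes e: "0 < e" and T: "0 \<le> T" and ne: "ip (\<lambda>s. ennreal (g s)) (Iv T) \<noteq> ennreal e"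
  defines "\<theta> \<equiv> Inf {ereal t | t. 0 \<le> t \<and> Gm t = e}"
  shows "(\<theta> > T \<or> \<theta> = \<infinity>) \<longleftrightarrow> ip (\<lambda>s. ennreal (g s)) (Iv T) < ennreal e"
proof (cases T)
  case (real t0)
  have t0: "0 \<le> t0" using T real by simp
  have ipt: "ip (\<lambda>s. ennreal (g s)) (Iv T) = ennreal (Gm t0)" using ip_G[OF t0] real by simp
  have Gne: "Gm t0 \<noteq> e" using ne ipt by auto
  show ?thesis
  proof
    assume L: "\<theta> > T \<or> \<theta> = \<infinity>"
    show "ip (\<lambda>s. ennreal (g s)) (Iv T) < ennreal e"
    proof (rule ccontr)
      assume "\<not> ?thesis"
      then have "e \<le> Gm t0" using ipt Gm_nonneg[OF t0] e by (simp add: not_less ennreal_le_iff)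
      moreover have "Gm 0 \<le> e" using Gm_0 e by simp
      ultimately obtain t where t: "0 \<le> t" "t \<le> t0" "Gm t = e"
        using IVT'[of Gm 0 e t0] Gm_cont[OF t0] t0 by auto
      then have "\<theta> \<le> ereal t" unfolding \<theta>_def by (intro Inf_lower) auto
      also have "ereal t \<le> T" using t real by simp
      finally have "\<theta> \<le> T" .
      then show False using L real by auto
    qed
  next
    assume R: "ip (\<lambda>s. ennreal (g s)) (Iv T) < ennreal e"
    then have Gl: "Gm t0 < e" using ipt Gm_nonneg[OF t0] by (simp add: ennreal_less_iff)
    have c: "\<forall>x\<in>{0..t0+1}. \<forall>\<epsilon>>0. \<exists>\<delta>>0. \<forall>x'\<in>{0..t0+1}. dist x' x < \<delta> \<longrightarrow> dist (Gm x') (Gm x) < \<epsilon>"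
      using Gm_cont[of "t0+1"] t0 unfolding continuous_on_iff by simp
    have "t0 \<in> {0..t0+1}" "0 < e - Gm t0" using t0 Gl by auto
    then obtain d where d: "d > 0" "\<forall>x'\<in>{0..t0+1}. dist x' t0 < d \<longrightarrow> dist (Gm x') (Gm t0) < e - Gm t0"
      using c by blast
    define \<delta> where "\<delta> = min (d/2) 1"
    have \<delta>: "0 < \<delta>" "\<delta> \<le> 1" "\<delta> < d" using d by (auto simp: \<delta>_def)
    have "ereal (t0 + \<delta>) \<le> \<theta>" unfolding \<theta>_def
    proof (rule Inf_greatest)
      fix z assume "z \<in> {ereal t | t. 0 \<le> t \<and> Gm t = e}"
      then obtain t where tz: "z = ereal t" "0 \<le> t" "Gm t = e" by auto
      show "ereal (t0 + \<delta>) \<le> z"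
      proof (rule ccontr)
        assume "\<not> ?thesis"
        then have tl: "t < t0 + \<delta>" using tz by simp
        show False
        proof (cases "t \<le> t0")
          case True
          then have "Gm t \<le> Gm t0" using Gm_mono[of t t0] tz by simp
          then show False using Gl tz by simp
        next
          case False
          then have "t \<in> {0..t0+1}" "dist t t0 < d" using tl \<delta> t0 by (auto simp: dist_real_def)
          then have "dist (Gm t) (Gm t0) < e - Gm t0" using d by blast
          then show False using tz by (simp add: dist_real_def)
        qed
      qed
    qed
    moreover have "T < ereal (t0 + \<delta>)" using \<delta> real by simp
    ultimately have "T < \<theta>" by (rule_tac less_le_trans) auto
    then show "\<theta> > T \<or> \<theta> = \<infinity>" by simp
  qed
next
  case PInf
  have "\<theta> = \<infinity> \<longleftrightarrow> ip (\<lambda>s. ennreal (g s)) (Iv T) < ennreal e"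
  proof
    assume th: "\<theta> = \<infinity>"
    show "ip (\<lambda>s. ennreal (g s)) (Iv T) < ennreal e"
    proof (rule ccontr)
      assume "\<not> ?thesis"
      then have "ennreal e < ip (\<lambda>s. ennreal (g s)) (Iv T)" using ne by simp
      then obtain n :: nat where n: "ennreal e < ip (\<lambda>s. ennreal (g s)) (Iv (ereal (real n)))"
        using ip_inf_SUP PInf by (auto simp: less_SUP_iff)
      then have "e < Gm (real n)" using ip_G[of "real n"] e by (simp add: ennreal_less_iff)
      moreover have "Gm 0 \<le> e" using Gm_0 e by simp
      ultimately obtain t where t: "0 \<le> t" "t \<le> real n" "Gm t = e"
        using IVT'[of Gm 0 e "real n"] Gm_cont[of "real n"] by auto
      then have "\<theta> \<le> ereal t" unfolding \<theta>_def by (intro Inf_lower) auto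
      with th show False by simp
    qed
  next
    assume R: "ip (\<lambda>s. ennreal (g s)) (Iv T) < ennreal e"
    have "Gm t \<noteq> e" if t: "0 \<le> t" for t
    proof
      assume t2: "Gm t = e"
      have "ennreal (Gm t) = ip (\<lambda>s. ennreal (g s)) (Iv (ereal t))" using ip_G[OF t(1)] by simp
      also have "\<dots> \<le> ip (\<lambda>s. ennreal (g s)) (Iv T)" using PInf by (intro ip_mono_set') (auto simp: Iv_def)
      finally show False using R t2 by simp
    qed
    then have E: "{ereal t | t. 0 \<le> t \<and> Gm t = e} = {}" by auto
    show "\<theta> = \<infinity>" unfolding \<theta>_def E by (simp add: top_ereal_def)
  qed
  then show ?thesis using PInf by simp
qed (use T in simp)

end


definition NG :: "'a measure \<Rightarrow> (real \<Rightarrow> 'a measure) \<Rightarrow> 'a measure" where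
  "NG M G = sigma (space M) (\<Union>t\<in>{0..}. sets (G t))"

context
  fixes M :: "'a measure" and G :: "real \<Rightarrow> 'a measure"
  assumes rcf: "right_cont_filtration M G"
begin

lemma space_G: "space (G t) = space M"
  using rcf unfolding right_cont_filtration_def by blast

lemma sets_G: "sets (G t) \<subseteq> sets M"
  using rcf unfolding right_cont_filtration_def by blast

lemma gen_pow: "(\<Union>t\<in>{0..}. sets (G t)) \<subseteq> Pow (space M)"
proof (intro subsetI, elim UN_E)
  fix A t assume "A \<in> sets (G t)"
  then have "A \<subseteq> space (G t)" by (rule sets.sets_into_space)
  then show "A \<in> Pow (space M)" using space_G by simp
qed

lemma gen_sub: "(\<Union>t\<in>{0..}. sets (G t)) \<subseteq> sets M"
  using sets_G by blast

lemma NG_space[simp]: "space (NG M G) = space M"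
  unfolding NG_def by (simp add: space_measure_of_conv)

lemma NG_sets: "sets (NG M G) = Ginf M G"
  unfolding NG_def Ginf_def using gen_pow by (simp add: sets_measure_of)

lemma sub_M: "subalgebra M (NG M G)"
  unfolding subalgebra_def using NG_sets gen_sub unfolding Ginf_def
  by (simp add: sets.sigma_sets_subset)

lemma G_sub_NG: "0 \<le> t \<Longrightarrow> sets (G t) \<subseteq> sets (NG M G)"
  unfolding NG_sets Ginf_def by (auto intro: sigma_sets.Basic)

lemma id_meas: "0 \<le> t \<Longrightarrow> (\<lambda>x. x) \<in> measurable (NG M G) (G t)"
proof (rule measurableI)
  fix x assume "x \<in> space (NG M G)" then show "x \<in> space (G t)" using space_G by simp
next
  fix A assume t: "0 \<le> t" and A: "A \<in> sets (G t)"
  then have "A \<subseteq> space M" using sets.sets_into_space[OF A] space_G by simp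
  then have "(\<lambda>x. x) -` A \<inter> space (NG M G) = A" by auto
  then show "(\<lambda>x. x) -` A \<inter> space (NG M G) \<in> sets (NG M G)" using G_sub_NG[OF t] A by auto
qed

lemma prog_joint:
  assumes prog: "progressive G X"
  shows "(\<lambda>(x, s). indicator {0..} s * X s x) \<in> borel_measurable (NG M G \<Otimes>\<^sub>M lborel)"
proof (rule borel_measurable_LIMSEQ_real)
  define clip where "clip n s = max 0 (min (real n) s)" for n :: nat and s :: real
  define fn where "fn n z = (if snd z \<in> {0..real n} then X (clip n (snd z)) (fst z) else 0)" for n z
  show "fn n \<in> borel_measurable (NG M G \<Otimes>\<^sub>M lborel)" for n
  proof -
    have cm: "(\<lambda>z. clip n (snd z)) \<in> measurable (NG M G \<Otimes>\<^sub>M lborel) (restrict_space lborel {0..real n})"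
    proof (rule measurable_restrict_space2)
      show "(\<lambda>z. clip n (snd z)) \<in> space (NG M G \<Otimes>\<^sub>M lborel) \<rightarrow> {0..real n}"
        by (auto simp: clip_def)
      show "(\<lambda>z. clip n (snd z)) \<in> measurable (NG M G \<Otimes>\<^sub>M lborel) lborel"
        unfolding clip_def by measurable
    qed
    have fm: "fst \<in> measurable (NG M G \<Otimes>\<^sub>M lborel) (G (real n))"
      using measurable_fst id_meas[of "real n"] by (rule measurable_comp[unfolded comp_def]) simp
    have pm: "(\<lambda>z. (clip n (snd z), fst z)) \<in> measurable (NG M G \<Otimes>\<^sub>M lborel) (restrict_space lborel {0..real n} \<Otimes>\<^sub>M G (real n))"
      using cm fm by (rule measurable_Pair)
    have "(\<lambda>(s, x). X s x) \<in> borel_measurable (restrict_space lborel {0..real n} \<Otimes>\<^sub>M G (real n))"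
      using prog unfolding progressive_def by simp
    from measurable_comp[OF pm this]
    have "(\<lambda>z. X (clip n (snd z)) (fst z)) \<in> borel_measurable (NG M G \<Otimes>\<^sub>M lborel)" by (simp add: comp_def)
    then show ?thesis unfolding fn_def by measurable
  qed
  fix z :: "'a \<times> real" assume "z \<in> space (NG M G \<Otimes>\<^sub>M lborel)"
  obtain x s where z: "z = (x, s)" by (cases z)
  have "eventually (\<lambda>n. fn n z = (case z of (x, s) \<Rightarrow> indicator {0..} s * X s x)) sequentially"
    unfolding eventually_sequentially
  proof (intro exI allI impI)
    fix n assume "nat \<lceil>s\<rceil> \<le> n"
    then have "s \<le> real n" by linarith
    then show "fn n z = (case z of (x, s) \<Rightarrow> indicator {0..} s * X s x)"
      by (auto simp: fn_def clip_def z indicator_def)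
  qed
  then show "(\<lambda>n. fn n z) \<longlonglongrightarrow> (case z of (x, s) \<Rightarrow> indicator {0..} s * X s x)"
    by (rule tendsto_eventually)
qed

lemma stop_meas:
  assumes S: "stopping_time_inf M G S"
  shows "S \<in> borel_measurable (NG M G)"
  unfolding borel_measurable_iff_Iic_ereal
proof
  fix a :: ereal
  show "S -` {..a} \<inter> space (NG M G) \<in> sets (NG M G)"
  proof (cases a)
    case (real t)
    show ?thesis
    proof (cases "0 \<le> t")
      case True
      have "S -` {..a} \<inter> space (NG M G) = {x\<in>space M. S x \<le> ereal t}" using real by auto
      also have "\<dots> \<in> sets (G t)" using S True unfolding stopping_time_inf_def by auto
      finally show ?thesis using G_sub_NG[OF True] by auto
    next
      case False
      have "\<not> S x \<le> ereal t" if x: "x \<in> space M" for x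
      proof
        assume "S x \<le> ereal t"
        moreover have "0 \<le> S x" using S x unfolding stopping_time_inf_def by auto
        ultimately have "(0::ereal) \<le> ereal t" by (metis order_trans)
        then show False using False by simp
      qed
      then have "S -` {..a} \<inter> space (NG M G) = {}" using real by auto
      then show ?thesis by simp
    qed
  next
    case PInf
    then have "S -` {..a} \<inter> space (NG M G) = space (NG M G)" by auto
    then show ?thesis by (metis sets.top)
  next
    case MInf
    have "\<not> S x \<le> -\<infinity>" if x: "x \<in> space M" for x
    proof
      assume "S x \<le> -\<infinity>"
      moreover have "0 \<le> S x" using S x unfolding stopping_time_inf_def by auto
      ultimately have "(0::ereal) \<le> -\<infinity>" by (metis order_trans)
      then show False by simp
    qed
    then have "S -` {..a} \<inter> space (NG M G) = {}" using MInf by auto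
    then show ?thesis by simp
  qed
qed

end


definition pz :: "(real \<Rightarrow> 'a \<Rightarrow> real) \<Rightarrow> 'a \<Rightarrow> real \<Rightarrow> real" where
  "pz X x s = indicator {0..} s * X s x"

lemma ip_fin:
  assumes "set_integrable lborel {0..t} f" "\<And>s. \<phi> s \<le> ennreal \<bar>f s\<bar>"
  shows "ip \<phi> (Iv (ereal t)) \<noteq> \<infinity>"
proof -
  have "ip \<phi> (Iv (ereal t)) \<le> (\<integral>\<^sup>+ s. ennreal (norm (indicator {0..t} s *\<^sub>R f s)) \<partial>lborel)"
    unfolding ip_def Iv_ereal using assms(2) by (intro nn_integral_mono) (auto simp: indicator_def)
  also have "\<dots> < \<infinity>" using assms(1) unfolding set_integrable_def integrable_iff_bounded by simp
  finally show ?thesis by simp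
qed

lemma ip_add:
  assumes [measurable]: "f \<in> borel_measurable borel" "h \<in> borel_measurable borel" "X \<in> sets borel"
  shows "ip (\<lambda>s. f s + h s) X = ip f X + ip h X"
proof -
  have "ip (\<lambda>s. f s + h s) X = (\<integral>\<^sup>+ s. f s * indicator X s + h s * indicator X s \<partial>lborel)"
    unfolding ip_def by (intro nn_integral_cong) (simp add: distrib_right)
  also have "\<dots> = ip f X + ip h X" unfolding ip_def by (rule nn_integral_add) measurable
  finally show ?thesis .
qed

locale setting = prob_space M for M :: "'a measure" +
  fixes G :: "real \<Rightarrow> 'a measure" and E :: "'a \<Rightarrow> real" and r \<gamma> :: "real \<Rightarrow> 'a \<Rightarrow> real"
  assumes rcf: "right_cont_filtration M G"
    and Ed: "distributed M lborel E (exponential_density 1)"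
    and ind: "prob_space.indep_set M {E -` B \<inter> space M | B. B \<in> sets borel} (Ginf M G)"
    and pr: "progressive G r" and lr: "loc_int_pathwise M r"
    and pg: "progressive G \<gamma>" and lg: "loc_int_pathwise M \<gamma>"
    and gpos: "\<forall>x\<in>space M. \<forall>t\<ge>0. 0 \<le> \<gamma> t x"
    and mono: "\<forall>x\<in>space M. mono_on {0..} (\<lambda>t. \<gamma> t x - r t x)"
begin

abbreviation "N \<equiv> NG M G"

lemma joint_r[measurable]: "(\<lambda>z. pz r (fst z) (snd z)) \<in> borel_measurable (N \<Otimes>\<^sub>M lborel)"
  using prog_joint[OF rcf pr] by (simp add: pz_def case_prod_beta')

lemma joint_g[measurable]: "(\<lambda>z. pz \<gamma> (fst z) (snd z)) \<in> borel_measurable (N \<Otimes>\<^sub>M lborel)"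
  using prog_joint[OF rcf pg] by (simp add: pz_def case_prod_beta')

lemma sec_r[measurable]: "x \<in> space M \<Longrightarrow> pz r x \<in> borel_measurable borel"
  using measurable_Pair2[OF joint_r, of x] by (simp add: NG_space[OF rcf])

lemma sec_g[measurable]: "x \<in> space M \<Longrightarrow> pz \<gamma> x \<in> borel_measurable borel"
  using measurable_Pair2[OF joint_g, of x] by (simp add: NG_space[OF rcf])

lemma si_r: "x \<in> space M \<Longrightarrow> 0 \<le> t \<Longrightarrow> set_integrable lborel {0..t} (pz r x)"
  using lr unfolding loc_int_pathwise_def
  by (subst set_integrable_cong[where f'="\<lambda>s. r s x"]) (auto simp: pz_def)

lemma si_g: "x \<in> space M \<Longrightarrow> 0 \<le> t \<Longrightarrow> set_integrable lborel {0..t} (pz \<gamma> x)"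
  using lg unfolding loc_int_pathwise_def
  by (subst set_integrable_cong[where f'="\<lambda>s. \<gamma> s x"]) (auto simp: pz_def)

lemma pz_g_nonneg: "x \<in> space M \<Longrightarrow> 0 \<le> pz \<gamma> x s"
  using gpos by (auto simp: pz_def indicator_def)

lemma fB_split: "x \<in> space M \<Longrightarrow> ip (fB (pz r x) (pz \<gamma> x)) X =
   ip (\<lambda>s. ennreal (max 0 (- pz r x s))) X + ip (\<lambda>s. ennreal (pz \<gamma> x s)) X" if "X \<in> sets borel"
  unfolding fB_def by (rule ip_add) (use that in measurable)

lemma pathw_x: "x \<in> space M \<Longrightarrow> pathw (pz r x) (pz \<gamma> x)"
proof
  assume x: "x \<in> space M"
  show "pz r x \<in> borel_measurable borel" "pz \<gamma> x \<in> borel_measurable borel" using x by measurable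
  show "0 \<le> pz \<gamma> x s" if "0 \<le> s" for s using pz_g_nonneg[OF x] .
  show "mono_on {0..} (\<lambda>t. pz \<gamma> x t - pz r x t)"
    using mono x by (auto simp: mono_on_def pz_def)
  show "ip (fP (pz r x)) (Iv (ereal t)) \<noteq> \<infinity>" if "0 \<le> t" for t
    by (rule ip_fin[OF si_r[OF x that]]) (auto simp: fP_def intro!: ennreal_leI)
  show "ip (fB (pz r x) (pz \<gamma> x)) (Iv (ereal t)) \<noteq> \<infinity>" if t: "0 \<le> t" for t
  proof -
    have "ip (\<lambda>s. ennreal (max 0 (- pz r x s))) (Iv (ereal t)) \<noteq> \<infinity>"
      by (rule ip_fin[OF si_r[OF x t]]) (auto intro!: ennreal_leI)
    moreover have "ip (\<lambda>s. ennreal (pz \<gamma> x s)) (Iv (ereal t)) \<noteq> \<infinity>"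
      by (rule ip_fin[OF si_g[OF x t]]) (auto intro!: ennreal_leI)
    ultimately show ?thesis using fB_split[OF Iv_meas x] by simp
  qed
qed

lemma thpath_x: "x \<in> space M \<Longrightarrow> thpath (pz \<gamma> x)"
proof
  assume x: "x \<in> space M"
  show "pz \<gamma> x \<in> borel_measurable borel" using x by measurable
  show "0 \<le> pz \<gamma> x s" if "0 \<le> s" for s using pz_g_nonneg[OF x] .
  show "set_integrable lborel {0..t} (pz \<gamma> x)" if "0 \<le> t" for t using si_g[OF x that] .
qed

definition tau :: "'a \<Rightarrow> ereal" where
  "tau x = Inf {ereal t | t. 0 \<le> t \<and> 0 \<le> \<gamma> t x - r t x}"

lemma tau_eq: "tauf (pz r x) (pz \<gamma> x) = tau x"
proof -
  have "{ereal t | t. 0 \<le> t \<and> 0 \<le> pz \<gamma> x t - pz r x t} = {ereal t | t. 0 \<le> t \<and> 0 \<le> \<gamma> t x - r t x}"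
    by (auto simp: pz_def)
  then show ?thesis unfolding tauf_def tau_def by simp
qed

lemma theta_eq: "default_time \<gamma> E x = Inf {ereal t | t. 0 \<le> t \<and> Gmf (pz \<gamma> x) t = E x}"
proof -
  have "(\<integral>s\<in>{0..t}. \<gamma> s x \<partial>lborel) = Gmf (pz \<gamma> x) t" for t
  proof -
    have "Gmf (pz \<gamma> x) t = (\<integral>s\<in>{0..t}. pz \<gamma> x s \<partial>lborel)" by (simp add: Gmf_def)
    also have "\<dots> = (\<integral>s\<in>{0..t}. \<gamma> s x \<partial>lborel)"
      by (rule set_lebesgue_integral_cong) (auto simp: pz_def)
    finally show ?thesis by simp
  qed
  then show ?thesis unfolding default_time_def by simp
qed

lemma cum_eq:
  assumes x: "x \<in> space M" and T: "0 \<le> T"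
  shows "cum_int r x T = CIf (ip (fP (pz r x)) (Iv T)) (ip (\<lambda>s. ennreal (max 0 (- pz r x s))) (Iv T))"
proof (cases T)
  case PInf
  have P: "(\<integral>\<^sup>+ s\<in>{0..}. ennreal (max 0 (r s x)) \<partial>lborel) = ip (fP (pz r x)) (Iv T)"
    unfolding ip_def PInf Iv_inf fP_def by (intro nn_integral_cong) (auto simp: pz_def indicator_def)
  have Nn: "(\<integral>\<^sup>+ s\<in>{0..}. ennreal (max 0 (- r s x)) \<partial>lborel) = ip (\<lambda>s. ennreal (max 0 (- pz r x s))) (Iv T)"
    unfolding ip_def PInf Iv_inf by (intro nn_integral_cong) (auto simp: pz_def indicator_def)
  show ?thesis unfolding cum_int_def using PInf P Nn by (simp add: CIf_def Let_def)
next
  case (real t)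
  have t: "0 \<le> t" using T real by simp
  have si: "integrable lborel (\<lambda>s. indicator {0..t} s *\<^sub>R pz r x s)"
    using si_r[OF x t] unfolding set_integrable_def .
  have "(\<integral>s\<in>{0..t}. r s x \<partial>lborel) = (\<integral>s\<in>{0..t}. pz r x s \<partial>lborel)"
    by (rule set_lebesgue_integral_cong) (auto simp: pz_def)
  also have "\<dots> = enn2real (\<integral>\<^sup>+ s. ennreal (indicator {0..t} s *\<^sub>R pz r x s) \<partial>lborel)
      - enn2real (\<integral>\<^sup>+ s. ennreal (- (indicator {0..t} s *\<^sub>R pz r x s)) \<partial>lborel)"
    unfolding set_lebesgue_integral_def by (rule real_lebesgue_integral_def[OF si])
  also have "(\<integral>\<^sup>+ s. ennreal (indicator {0..t} s *\<^sub>R pz r x s) \<partial>lborel) = ip (fP (pz r x)) (Iv T)"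
    unfolding ip_def real Iv_ereal fP_def by (intro nn_integral_cong) (auto simp: indicator_def max_def ennreal_neg)
  also have "(\<integral>\<^sup>+ s. ennreal (- (indicator {0..t} s *\<^sub>R pz r x s)) \<partial>lborel) = ip (\<lambda>s. ennreal (max 0 (- pz r x s))) (Iv T)"
    unfolding ip_def real Iv_ereal by (intro nn_integral_cong) (auto simp: indicator_def max_def ennreal_neg)
  finally have eq: "(\<integral>s\<in>{0..t}. r s x \<partial>lborel) = enn2real (ip (fP (pz r x)) (Iv T)) - enn2real (ip (\<lambda>s. ennreal (max 0 (- pz r x s))) (Iv T))" .
  have f1: "ip (fP (pz r x)) (Iv T) \<noteq> \<infinity>"
    using pathw.finP[OF pathw_x[OF x] t] real by simp
  have f2: "ip (\<lambda>s. ennreal (max 0 (- pz r x s))) (Iv T) \<noteq> \<infinity>"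
    unfolding real by (rule ip_fin[OF si_r[OF x t]]) (auto intro!: ennreal_leI)
  obtain a where a: "ip (fP (pz r x)) (Iv T) = ennreal a" "0 \<le> a" using f1 by (rule fin_enn)
  obtain b where b: "ip (\<lambda>s. ennreal (max 0 (- pz r x s))) (Iv T) = ennreal b" "0 \<le> b" using f2 by (rule fin_enn)
  show ?thesis unfolding cum_int_def using real eq a b by (simp add: CIf_def)
qed (use T in simp)

end


context setting begin

lemma E_meas[measurable]: "E \<in> borel_measurable M"
  using distributed_measurable[OF Ed] by simp

lemma subMN: "sets N \<subseteq> sets M" "space N = space M"
  using sub_M[OF rcf] unfolding subalgebra_def by auto

lemma id_MN: "(\<lambda>x. x) \<in> measurable M N"
proof (rule measurableI)
  fix x assume "x \<in> space M" then show "x \<in> space N" using subMN by simp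
next
  fix A assume A: "A \<in> sets N"
  then have "A \<subseteq> space M" using sets.sets_into_space[OF A] subMN by simp
  then have "(\<lambda>x. x) -` A \<inter> space M = A" by auto
  then show "(\<lambda>x. x) -` A \<inter> space M \<in> sets M" using A subMN by auto
qed

abbreviation "EXm \<equiv> distr M borel E"

lemma indep_nn:
  assumes F[measurable]: "F \<in> borel_measurable (borel \<Otimes>\<^sub>M N)"
  shows "(\<integral>\<^sup>+ x. F (E x, x) \<partial>M) = (\<integral>\<^sup>+ x. (\<integral>\<^sup>+ e. F (e, x) \<partial>EXm) \<partial>M)"
proof -
  have pm: "(\<lambda>x. (E x, x)) \<in> measurable M (borel \<Otimes>\<^sub>M N)"
    using id_MN by measurable
  have sf1: "sigma_finite_measure EXm"
    by (intro prob_space_imp_sigma_finite prob_space_distr) simp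
  have sf2: "sigma_finite_measure (distr M N (\<lambda>x. x))"
    by (intro prob_space_imp_sigma_finite prob_space_distr id_MN)
  interpret pf: pair_sigma_finite EXm "distr M N (\<lambda>x. x)"
    using sf1 sf2 by (simp add: pair_sigma_finite_def)
  have eq: "EXm \<Otimes>\<^sub>M distr M N (\<lambda>x. x) = distr M (borel \<Otimes>\<^sub>M N) (\<lambda>x. (E x, x))"
  proof (rule pair_measure_eqI[OF sf1 sf2])
    show "sets (EXm \<Otimes>\<^sub>M distr M N (\<lambda>x. x)) = sets (distr M (borel \<Otimes>\<^sub>M N) (\<lambda>x. (E x, x)))"
      by simp
    fix A B assume A: "A \<in> sets EXm" and B: "B \<in> sets (distr M N (\<lambda>x. x))"
    then have A': "A \<in> sets borel" and B': "B \<in> sets N" by auto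
    then have BG: "B \<in> Ginf M G" using NG_sets[OF rcf] by simp
    have Bsp: "B \<subseteq> space M" using sets.sets_into_space[OF B'] subMN by simp
    have BM: "B \<in> sets M" using B' subMN by auto
    have EA: "E -` A \<inter> space M \<in> sets M" using A' by measurable
    have "emeasure EXm A = ennreal (prob (E -` A \<inter> space M))"
      using A' by (simp add: emeasure_distr emeasure_eq_measure)
    moreover have "emeasure (distr M N (\<lambda>x. x)) B = ennreal (prob B)"
    proof -
      have "emeasure (distr M N (\<lambda>x. x)) B = emeasure M ((\<lambda>x. x) -` B \<inter> space M)"
        using B' by (intro emeasure_distr id_MN) 
      also have "(\<lambda>x. x) -` B \<inter> space M = B" using Bsp by auto
      finally show ?thesis by (simp add: emeasure_eq_measure)
    qed
    moreover have "emeasure (distr M (borel \<Otimes>\<^sub>M N) (\<lambda>x. (E x, x))) (A \<times> B) = ennreal (prob ((E -` A \<inter> space M) \<inter> B))"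
    proof -
      have "emeasure (distr M (borel \<Otimes>\<^sub>M N) (\<lambda>x. (E x, x))) (A \<times> B) = emeasure M ((\<lambda>x. (E x, x)) -` (A \<times> B) \<inter> space M)"
        using A' B' by (intro emeasure_distr pm) auto
      also have "(\<lambda>x. (E x, x)) -` (A \<times> B) \<inter> space M = (E -` A \<inter> space M) \<inter> B" using Bsp by auto
      finally show ?thesis by (simp add: emeasure_eq_measure)
    qed
    moreover have "prob ((E -` A \<inter> space M) \<inter> B) = prob (E -` A \<inter> space M) * prob B"
      by (rule indep_setD[OF ind]) (use A' BG in auto)
    ultimately show "emeasure EXm A * emeasure (distr M N (\<lambda>x. x)) B = emeasure (distr M (borel \<Otimes>\<^sub>M N) (\<lambda>x. (E x, x))) (A \<times> B)"
      by (simp add: ennreal_mult[symmetric])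
  qed
  have Fm: "F \<in> borel_measurable (EXm \<Otimes>\<^sub>M distr M N (\<lambda>x. x))" by measurable
  have "(\<integral>\<^sup>+ x. F (E x, x) \<partial>M) = integral\<^sup>N (distr M (borel \<Otimes>\<^sub>M N) (\<lambda>x. (E x, x))) F"
    by (rule nn_integral_distr[symmetric, OF pm]) simp
  also have "\<dots> = integral\<^sup>N (EXm \<Otimes>\<^sub>M distr M N (\<lambda>x. x)) F" by (simp add: eq)
  also have "\<dots> = (\<integral>\<^sup>+ y. (\<integral>\<^sup>+ e. F (e, y) \<partial>EXm) \<partial>distr M N (\<lambda>x. x))"
    by (rule pf.nn_integral_snd[symmetric, OF Fm])
  also have "\<dots> = (\<integral>\<^sup>+ x. (\<integral>\<^sup>+ e. F (e, x) \<partial>EXm) \<partial>M)"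
  proof (rule nn_integral_distr[OF id_MN])
    have "(\<lambda>(y, e). F (e, y)) \<in> borel_measurable (distr M N (\<lambda>x. x) \<Otimes>\<^sub>M EXm)" by measurable
    then show "(\<lambda>y. \<integral>\<^sup>+ e. F (e, y) \<partial>EXm) \<in> borel_measurable (distr M N (\<lambda>x. x))"
      using pf.M1.borel_measurable_nn_integral[of "\<lambda>y e. F (e, y)"] by simp
  qed
  finally show ?thesis .
qed

lemma Qf_eq: "emeasure EXm {e. a < ennreal e} = Qf a"
proof (cases a rule: ennreal_cases)
  case (real b)
  have "{e. a < ennreal e} = {b<..}" using real by (auto simp: ennreal_less_iff)
  then have "emeasure EXm {e. a < ennreal e} = emeasure M (E -` {b<..} \<inter> space M)"
    by (simp add: emeasure_distr)
  also have "E -` {b<..} \<inter> space M = {x\<in>space M. b < E x}" by auto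
  also have "emeasure M \<dots> = ennreal (exp (- b * 1))"
    using exponential_distributedD_gt[OF Ed real(1)] by (simp add: emeasure_eq_measure)
  finally show ?thesis using real by (simp add: Qf_def)
next
  case top
  then show ?thesis by (simp add: Qf_def)
qed

lemma Eneg_null: "emeasure M {x\<in>space M. E x \<le> 0} = 0"
proof -
  have "emeasure M {x\<in>space M. E x \<le> 0} = ennreal (1 - exp (- 0 * 1))"
    using exponential_distributedD_le[OF Ed order.refl] by (simp add: emeasure_eq_measure)
  then show ?thesis by simp
qed

lemma E_pos: "AE x in M. 0 < E x"
proof (rule AE_I')
  show "{x\<in>space M. E x \<le> 0} \<in> null_sets M" using Eneg_null by (auto intro: null_setsI)
qed auto

lemma null_eq: "emeasure EXm {e. ennreal e = a} = 0"
proof -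
  have sub: "{e. ennreal e = a} \<subseteq> {..0} \<union> {enn2real a}"
  proof
    fix e assume "e \<in> {e. ennreal e = a}"
    then have ea: "ennreal e = a" by simp
    show "e \<in> {..0} \<union> {enn2real a}"
    proof (cases "e \<le> 0")
      case False
      then have "enn2real a = e" using ea[symmetric] by simp
      then show ?thesis by simp
    qed simp
  qed
  have h1: "emeasure EXm {..0} = 0"
  proof -
    have "emeasure EXm {..0} = emeasure M (E -` {..0} \<inter> space M)" by (simp add: emeasure_distr)
    also have "E -` {..0} \<inter> space M = {x\<in>space M. E x \<le> 0}" by auto
    finally show ?thesis using Eneg_null by simp
  qed
  have h2: "emeasure EXm {c} = 0" for c
  proof -
    have "emeasure EXm {c} = emeasure M (E -` {c} \<inter> space M)" by (simp add: emeasure_distr)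
    also have "\<dots> = (\<integral>\<^sup>+ x. ennreal (exponential_density 1 x) * indicator {c} x \<partial>lborel)"
      using distributed_emeasure[OF Ed, of "{c}"] by simp
    also have "\<dots> = 0"
      by (rule nn_integral_null_set) (auto simp: null_sets_def)
    finally show ?thesis .
  qed
  have "emeasure EXm {e. ennreal e = a} \<le> emeasure EXm ({..0} \<union> {enn2real a})"
    using sub by (intro emeasure_mono) auto
  also have "\<dots> \<le> emeasure EXm {..0} + emeasure EXm {enn2real a}"
    by (intro emeasure_subadditive) auto
  finally show ?thesis using h1 h2 by simp
qed

end


lemma exp_ext_meas[measurable (raw)]:
  assumes [measurable]: "f \<in> borel_measurable M" shows "(\<lambda>x. exp_ext (f x)) \<in> borel_measurable M"
  unfolding exp_ext_def by measurable

lemma CIf_meas[measurable (raw)]: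
  assumes [measurable]: "f \<in> borel_measurable M" "g \<in> borel_measurable M"
  shows "(\<lambda>x. CIf (f x) (g x)) \<in> borel_measurable M"
  unfolding CIf_def by measurable

lemma wf_meas[measurable (raw)]:
  assumes [measurable]: "f \<in> borel_measurable M" "g \<in> borel_measurable M"
  shows "(\<lambda>x. wfW (f x) (g x)) \<in> borel_measurable M"
  unfolding wfW_def by measurable

context setting begin

lemma ind_meas:
  assumes S[measurable]: "S \<in> borel_measurable N"
  shows "(\<lambda>z. indicator (Iv (S (fst z))) (snd z) :: ennreal) \<in> borel_measurable (N \<Otimes>\<^sub>M lborel)"
proof -
  have "(\<lambda>z. indicator (Iv (S (fst z))) (snd z) :: ennreal) = (\<lambda>z. if 0 \<le> snd z \<and> ereal (snd z) \<le> S (fst z) then 1 else 0)"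
    by (auto simp: Iv_def indicator_def fun_eq_iff)
  also have "\<dots> \<in> borel_measurable (N \<Otimes>\<^sub>M lborel)" by measurable
  finally show ?thesis .
qed

lemma ip_meas:
  assumes S: "S \<in> borel_measurable N"
    and h[measurable]: "(\<lambda>z. h (fst z) (snd z)) \<in> borel_measurable (N \<Otimes>\<^sub>M lborel)"
  shows "(\<lambda>x. ip (h x) (Iv (S x))) \<in> borel_measurable N"
  unfolding ip_def
proof (rule lborel.borel_measurable_nn_integral)
  note ind_meas[OF S, measurable]
  show "(\<lambda>(x, s). h x s * indicator (Iv (S x)) s) \<in> borel_measurable (N \<Otimes>\<^sub>M lborel)"
    unfolding case_prod_beta by measurable
qed

end


context setting begin

lemma payoff_eq:
  assumes S: "stopping_time_inf M G S"
  shows "payoff M r (default_time \<gamma> E) S = (\<integral>\<^sup>+ x. exp_ext (Wp (pz r x) (pz \<gamma> x) (S x)) \<partial>M)"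
proof -
  have Sm[measurable]: "S \<in> borel_measurable N" by (rule stop_meas[OF rcf S])
  have S0: "\<And>x. x \<in> space M \<Longrightarrow> 0 \<le> S x" using S unfolding stopping_time_inf_def by auto
  define PP where "PP x = ip (fP (pz r x)) (Iv (S x))" for x
  define NN where "NN x = ip (\<lambda>s. ennreal (max 0 (- pz r x s))) (Iv (S x))" for x
  define GG where "GG x = ip (\<lambda>s. ennreal (pz \<gamma> x s)) (Iv (S x))" for x
  have PPm[measurable]: "PP \<in> borel_measurable N"
    using ip_meas[OF Sm, of "\<lambda>x s. ennreal (max 0 (pz r x s))"] unfolding PP_def fP_def by simp
  have NNm[measurable]: "NN \<in> borel_measurable N"
    using ip_meas[OF Sm, of "\<lambda>x s. ennreal (max 0 (- pz r x s))"] unfolding NN_def by simp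
  have GGm[measurable]: "GG \<in> borel_measurable N"
    using ip_meas[OF Sm, of "\<lambda>x s. ennreal (pz \<gamma> x s)"] unfolding GG_def by simp
  have GGM[measurable]: "GG \<in> borel_measurable M"
    by (rule measurable_from_subalg[OF sub_M[OF rcf] GGm])
  have sets_lt: "{e. a < ennreal e} \<in> sets borel" for a
  proof -
    have "{e. a < ennreal e} = {e \<in> space borel. a < ennreal e}" by simp
    also have "\<dots> \<in> sets borel" by measurable
    finally show ?thesis .
  qed
  have sets_eq: "{e. ennreal e = a} \<in> sets borel" for a
  proof -
    have "{e. ennreal e = a} = {e \<in> space borel. ennreal e = a}" by simp
    also have "\<dots> \<in> sets borel" by measurable
    finally show ?thesis .
  qed
  have null: "AE x in M. GG x \<noteq> ennreal (E x)"
  proof (rule AE_I')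
    define H where "H z = (if GG (snd z) = ennreal (fst z) then 1 else 0 :: ennreal)" for z :: "real \<times> 'a"
    have Hm: "H \<in> borel_measurable (borel \<Otimes>\<^sub>M N)" unfolding H_def by measurable
    have A: "{x\<in>space M. GG x = ennreal (E x)} \<in> sets M" by measurable
    have "emeasure M {x\<in>space M. GG x = ennreal (E x)} = (\<integral>\<^sup>+ x. indicator {x\<in>space M. GG x = ennreal (E x)} x \<partial>M)"
      using A by simp
    also have "\<dots> = (\<integral>\<^sup>+ x. H (E x, x) \<partial>M)"
      by (intro nn_integral_cong) (auto simp: H_def indicator_def)
    also have "\<dots> = (\<integral>\<^sup>+ x. (\<integral>\<^sup>+ e. H (e, x) \<partial>EXm) \<partial>M)" by (rule indep_nn[OF Hm])
    also have "\<dots> = (\<integral>\<^sup>+ x. 0 \<partial>M)"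
    proof (intro nn_integral_cong)
      fix x
      have "(\<integral>\<^sup>+ e. H (e, x) \<partial>EXm) = (\<integral>\<^sup>+ e. indicator {e. ennreal e = GG x} e \<partial>EXm)"
        by (intro nn_integral_cong) (auto simp: H_def indicator_def)
      also have "\<dots> = emeasure EXm {e. ennreal e = GG x}"
        using sets_eq[of "GG x"] by (intro nn_integral_indicator) simp
      also have "\<dots> = 0" by (rule null_eq)
      finally show "(\<integral>\<^sup>+ e. H (e, x) \<partial>EXm) = 0" .
    qed
    finally have "emeasure M {x\<in>space M. GG x = ennreal (E x)} = 0" by simp
    then show "{x\<in>space M. GG x = ennreal (E x)} \<in> null_sets M" using A by (auto intro: null_setsI)
  qed simp
  define F where "F z = (if GG (snd z) < ennreal (fst z) then exp_ext (CIf (PP (snd z)) (NN (snd z))) else 0)" for z :: "real \<times> 'a"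
  have Fm: "F \<in> borel_measurable (borel \<Otimes>\<^sub>M N)" unfolding F_def by measurable
  have "payoff M r (default_time \<gamma> E) S = (\<integral>\<^sup>+ x. F (E x, x) \<partial>M)"
    unfolding payoff_def
  proof (rule nn_integral_cong_AE)
    show "AE x in M. exp_ext (cum_int r x (S x)) * indicator {x. S x < default_time \<gamma> E x \<or> default_time \<gamma> E x = \<infinity>} x = F (E x, x)"
      using AE_space E_pos null
    proof eventually_elim
      case (elim x)
      then have x: "x \<in> space M" by simp
      have Epos: "0 < E x" and ne: "GG x \<noteq> ennreal (E x)" using elim by auto
      interpret th: thpath "pz \<gamma> x" by (rule thpath_x[OF x])
      have c: "cum_int r x (S x) = CIf (PP x) (NN x)" unfolding PP_def NN_def by (rule cum_eq[OF x S0[OF x]])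
      have "(S x < default_time \<gamma> E x \<or> default_time \<gamma> E x = \<infinity>) \<longleftrightarrow> GG x < ennreal (E x)"
        unfolding theta_eq GG_def by (rule th.theta_char[OF Epos S0[OF x]]) (use ne in \<open>simp add: GG_def\<close>)
      then show ?case using c by (simp add: F_def indicator_def)
    qed
  qed
  also have "\<dots> = (\<integral>\<^sup>+ x. (\<integral>\<^sup>+ e. F (e, x) \<partial>EXm) \<partial>M)" by (rule indep_nn[OF Fm])
  also have "\<dots> = (\<integral>\<^sup>+ x. exp_ext (Wp (pz r x) (pz \<gamma> x) (S x)) \<partial>M)"
  proof (intro nn_integral_cong)
    fix x assume x: "x \<in> space M"
    have "(\<integral>\<^sup>+ e. F (e, x) \<partial>EXm) = (\<integral>\<^sup>+ e. exp_ext (CIf (PP x) (NN x)) * indicator {e. GG x < ennreal e} e \<partial>EXm)"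
      by (intro nn_integral_cong) (auto simp: F_def indicator_def)
    also have "\<dots> = exp_ext (CIf (PP x) (NN x)) * emeasure EXm {e. GG x < ennreal e}"
      using sets_lt[of "GG x"] by (intro nn_integral_cmult_indicator) simp
    also have "\<dots> = exp_ext (CIf (PP x) (NN x)) * Qf (GG x)" by (simp add: Qf_eq)
    also have "\<dots> = exp_ext (wfW (PP x) (NN x + GG x))" by (rule exp_ext_CIf_Qf)
    also have "NN x + GG x = ip (fB (pz r x) (pz \<gamma> x)) (Iv (S x))"
      unfolding NN_def GG_def by (rule fB_split[OF Iv_meas x, symmetric])
    finally show "(\<integral>\<^sup>+ e. F (e, x) \<partial>EXm) = exp_ext (Wp (pz r x) (pz \<gamma> x) (S x))"
      by (simp add: Wp_def PP_def)
  qed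
  finally show ?thesis .
qed

end


context setting begin

lemma tau_tauf: "tau x = tauf (\<lambda>t. r t x) (\<lambda>t. \<gamma> t x)"
  unfolding tau_def tauf_def by simp

lemma sec_G:
  assumes prog: "progressive G X" and q: "0 \<le> q"
  shows "(\<lambda>x. X q x) \<in> borel_measurable (G q)"
proof -
  have m1: "(\<lambda>(s, x). X s x) \<in> borel_measurable (restrict_space lborel {0..q} \<Otimes>\<^sub>M G q)"
    using prog q unfolding progressive_def by simp
  have m2: "Pair q \<in> measurable (G q) (restrict_space lborel {0..q} \<Otimes>\<^sub>M G q)"
    by (rule measurable_Pair1') (use q in \<open>simp add: space_restrict_space\<close>)
  from measurable_comp[OF m2 m1] show ?thesis by (simp add: comp_def)
qed

lemma tau_stop: "stopping_time_inf M G tau"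
  unfolding stopping_time_inf_def
proof (intro conjI ballI allI impI)
  fix x show "0 \<le> tau x" unfolding tau_tauf by (rule tau_nonneg)
next
  fix t :: real assume t: "0 \<le> t"
  have rc: "sets (G t) = (\<Inter>s\<in>{t<..}. sets (G s))"
    using rcf t unfolding right_cont_filtration_def by blast
  have fmono: "\<And>s u. 0 \<le> s \<Longrightarrow> s \<le> u \<Longrightarrow> sets (G s) \<subseteq> sets (G u)"
    using rcf unfolding right_cont_filtration_def by blast
  have "{x\<in>space M. tau x \<le> ereal t} \<in> sets (G u)" if u: "t < u" for u
  proof -
    define Q where "Q = \<rat> \<inter> {t<..<u}"
    have Qc: "countable Q" unfolding Q_def by (intro countable_Int1 countable_rat)
    obtain q0 where "q0 \<in> \<rat>" "t < q0" "q0 < u" using Rats_dense_in_real[OF u] by blast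
    then have Qne: "Q \<noteq> {}" unfolding Q_def by auto
    have eq: "{x\<in>space M. tau x \<le> ereal t} = (\<Inter>q\<in>Q. {x\<in>space M. 0 \<le> \<gamma> q x - r q x})"
    proof (intro set_eqI iffI)
      fix x assume "x \<in> {x\<in>space M. tau x \<le> ereal t}"
      then have x: "x \<in> space M" and tx: "tau x \<le> ereal t" by auto
      show "x \<in> (\<Inter>q\<in>Q. {x\<in>space M. 0 \<le> \<gamma> q x - r q x})"
      proof
        fix q assume "q \<in> Q"
        then have q: "t < q" unfolding Q_def by auto
        then have "tau x < ereal q" using tx by (simp add: le_less_trans)
        then have "0 \<le> \<gamma> q x - r q x"
          using tau_after[of "\<lambda>t. \<gamma> t x" "\<lambda>t. r t x" q] mono x q t unfolding tau_tauf by auto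
        then show "x \<in> {x\<in>space M. 0 \<le> \<gamma> q x - r q x}" using x by simp
      qed
    next
      fix x assume xI: "x \<in> (\<Inter>q\<in>Q. {x\<in>space M. 0 \<le> \<gamma> q x - r q x})"
      then have x: "x \<in> space M" using Qne by auto
      have "tau x \<le> ereal t"
      proof (rule ccontr)
        assume "\<not> tau x \<le> ereal t"
        then have lt: "ereal t < tau x" by simp
        define v where "v = (if tau x = \<infinity> then u else min u (real_of_ereal (tau x)))"
        have tv0: "t < v \<and> v \<le> u \<and> ereal v \<le> tau x"
        proof (cases "tau x")
          case (real c)
          then show ?thesis using lt u by (auto simp: v_def)
        next
          case PInf
          then show ?thesis using lt u by (auto simp: v_def)
        next
          case MInf
          then show ?thesis using lt by simp
        qed
        then have tv: "t < v" "v \<le> u" "ereal v \<le> tau x" by auto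
        obtain q where q: "q \<in> \<rat>" "t < q" "q < v" using Rats_dense_in_real[OF tv(1)] by blast
        then have "q \<in> Q" using tv unfolding Q_def by auto
        then have "0 \<le> \<gamma> q x - r q x" using xI by auto
        moreover have "0 \<le> q" using q t by simp
        ultimately have "tau x \<le> ereal q" unfolding tau_def by (intro Inf_lower) auto
        moreover have "ereal q < ereal v" using q by simp
        then have "ereal q < tau x" using tv(3) by (rule less_le_trans)
        ultimately show False by simp
      qed
      then show "x \<in> {x\<in>space M. tau x \<le> ereal t}" using x by simp
    qed
    have "(\<lambda>q. {x\<in>space M. 0 \<le> \<gamma> q x - r q x}) ` Q \<subseteq> sets (G u)"
    proof
      fix A assume "A \<in> (\<lambda>q. {x\<in>space M. 0 \<le> \<gamma> q x - r q x}) ` Q"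
      then obtain q where q: "q \<in> Q" "A = {x\<in>space M. 0 \<le> \<gamma> q x - r q x}" by auto
      have q0: "0 \<le> q" "q \<le> u" using q t unfolding Q_def by auto
      have [measurable]: "(\<lambda>x. \<gamma> q x) \<in> borel_measurable (G q)" "(\<lambda>x. r q x) \<in> borel_measurable (G q)"
        using sec_G[OF pg q0(1)] sec_G[OF pr q0(1)] .
      have "{x\<in>space (G q). 0 \<le> \<gamma> q x - r q x} \<in> sets (G q)" by measurable
      then have "A \<in> sets (G q)" using q space_G[OF rcf] by simp
      then show "A \<in> sets (G u)" using fmono[OF q0] by auto
    qed
    then show ?thesis unfolding eq by (intro sets.countable_INT' Qc Qne)
  qed
  then show "{x\<in>space M. tau x \<le> ereal t} \<in> sets (G t)" unfolding rc by auto
qed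

end


context setting begin

abbreviation "Wx x T \<equiv> Wp (pz r x) (pz \<gamma> x) T"

lemma P_inf: "ip (fP (pz r x)) (Iv \<infinity>) = (\<integral>\<^sup>+ s\<in>{0..}. ennreal (max 0 (r s x)) \<partial>lborel)"
  unfolding ip_def Iv_inf fP_def by (intro nn_integral_cong) (auto simp: pz_def indicator_def)

lemma Wm:
  assumes S: "stopping_time_inf M G S"
  shows "(\<lambda>x. exp_ext (Wx x (S x))) \<in> borel_measurable M"
proof -
  have Sm[measurable]: "S \<in> borel_measurable N" by (rule stop_meas[OF rcf S])
  have [measurable]: "(\<lambda>x. ip (fP (pz r x)) (Iv (S x))) \<in> borel_measurable N"
    using ip_meas[OF Sm, of "\<lambda>x s. ennreal (max 0 (pz r x s))"] unfolding fP_def by simp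
  have [measurable]: "(\<lambda>x. ip (fB (pz r x) (pz \<gamma> x)) (Iv (S x))) \<in> borel_measurable N"
    using ip_meas[OF Sm, of "\<lambda>x s. ennreal (max 0 (- pz r x s)) + ennreal (pz \<gamma> x s)"] unfolding fB_def by simp
  have "(\<lambda>x. exp_ext (Wx x (S x))) \<in> borel_measurable N" unfolding Wp_def by measurable
  then show ?thesis by (rule measurable_from_subalg[OF sub_M[OF rcf]])
qed

lemma good_AE:
  assumes C: "(AE x in M. (\<integral>\<^sup>+ s\<in>{0..}. ennreal (max 0 (r s x)) \<partial>lborel) < \<infinity>)
         \<or> (AE x in M. Inf {ereal t | t. 0 \<le> t \<and> 0 \<le> \<gamma> t x - r t x} < \<infinity>)"
  shows "AE x in M. tauf (pz r x) (pz \<gamma> x) < \<infinity> \<or> ip (fP (pz r x)) (Iv \<infinity>) \<noteq> \<infinity>"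
  using C
proof
  assume "AE x in M. (\<integral>\<^sup>+ s\<in>{0..}. ennreal (max 0 (r s x)) \<partial>lborel) < \<infinity>"
  then show ?thesis
  proof eventually_elim
    case (elim x)
    then have "ip (fP (pz r x)) (Iv \<infinity>) < \<infinity>" by (simp only: P_inf)
    then have "ip (fP (pz r x)) (Iv \<infinity>) \<noteq> \<infinity>" by (rule less_imp_neq)
    then show ?case by blast
  qed
next
  assume "AE x in M. Inf {ereal t | t. 0 \<le> t \<and> 0 \<le> \<gamma> t x - r t x} < \<infinity>"
  then show ?thesis by eventually_elim (simp add: tau_eq tau_def)
qed

lemma payoff_le:
  assumes C: "(AE x in M. (\<integral>\<^sup>+ s\<in>{0..}. ennreal (max 0 (r s x)) \<partial>lborel) < \<infinity>)
         \<or> (AE x in M. Inf {ereal t | t. 0 \<le> t \<and> 0 \<le> \<gamma> t x - r t x} < \<infinity>)"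
    and S: "stopping_time_inf M G S"
  shows "payoff M r (default_time \<gamma> E) S \<le> payoff M r (default_time \<gamma> E) tau"
  unfolding payoff_eq[OF S] payoff_eq[OF tau_stop]
proof (rule nn_integral_mono_AE)
  show "AE x in M. exp_ext (Wx x (S x)) \<le> exp_ext (Wx x (tau x))"
    using AE_space good_AE[OF C]
  proof eventually_elim
    case (elim x)
    then have x: "x \<in> space M" by simp
    have "0 \<le> S x" using S x unfolding stopping_time_inf_def by auto
    then have "Wx x (S x) \<le> Wx x (tauf (pz r x) (pz \<gamma> x))"
      using pathw.PW1[OF pathw_x[OF x]] elim by blast
    then show ?case unfolding tau_eq by (rule exp_ext_mono)
  qed
qed

lemma key_lemma:
  assumes C: "(AE x in M. (\<integral>\<^sup>+ s\<in>{0..}. ennreal (max 0 (r s x)) \<partial>lborel) < \<infinity>)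
         \<or> (AE x in M. Inf {ereal t | t. 0 \<le> t \<and> 0 \<le> \<gamma> t x - r t x} < \<infinity>)"
    and V: "value_os M G r (default_time \<gamma> E) < \<infinity>"
    and S: "optimal_stopping M G r (default_time \<gamma> E) S"
  shows "AE x in M. exp_ext (Wx x (tau x)) \<le> exp_ext (Wx x (S x))"
proof -
  have Sst: "stopping_time_inf M G S" using S unfolding optimal_stopping_def by simp
  have "payoff M r (default_time \<gamma> E) tau \<le> payoff M r (default_time \<gamma> E) S"
    using S tau_stop unfolding optimal_stopping_def by blast
  moreover have "payoff M r (default_time \<gamma> E) S \<le> payoff M r (default_time \<gamma> E) tau"
    by (rule payoff_le[OF C Sst])
  ultimately have eq: "payoff M r (default_time \<gamma> E) S = payoff M r (default_time \<gamma> E) tau" by simp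
  have "payoff M r (default_time \<gamma> E) tau \<le> value_os M G r (default_time \<gamma> E)"
    unfolding value_os_def using tau_stop by (intro SUP_upper) simp
  then have fin: "payoff M r (default_time \<gamma> E) S \<noteq> \<infinity>" using V eq by auto
  show ?thesis
  proof (rule ccontr)
    assume nAE: "\<not> ?thesis"
    have "(\<integral>\<^sup>+ x. exp_ext (Wx x (S x)) \<partial>M) < (\<integral>\<^sup>+ x. exp_ext (Wx x (tau x)) \<partial>M)"
    proof (rule nn_integral_less)
      show "(\<lambda>x. exp_ext (Wx x (S x))) \<in> borel_measurable M" by (rule Wm[OF Sst])
      show "(\<lambda>x. exp_ext (Wx x (tau x))) \<in> borel_measurable M" by (rule Wm[OF tau_stop])
      show "(\<integral>\<^sup>+ x. exp_ext (Wx x (S x)) \<partial>M) \<noteq> \<infinity>" using fin unfolding payoff_eq[OF Sst] .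
      show "AE x in M. exp_ext (Wx x (S x)) \<le> exp_ext (Wx x (tau x))"
        using AE_space good_AE[OF C]
      proof eventually_elim
        case (elim x)
        then have x: "x \<in> space M" by simp
        have "0 \<le> S x" using Sst x unfolding stopping_time_inf_def by auto
        then have "Wx x (S x) \<le> Wx x (tauf (pz r x) (pz \<gamma> x))"
          using pathw.PW1[OF pathw_x[OF x]] elim by blast
        then show ?case unfolding tau_eq by (rule exp_ext_mono)
      qed
      show "\<not> (AE x in M. exp_ext (Wx x (tau x)) \<le> exp_ext (Wx x (S x)))" by (rule nAE)
    qed
    then show False using eq unfolding payoff_eq[OF Sst] payoff_eq[OF tau_stop] by simp
  qed
qed


lemma min_lemma:
  assumes C: "(AE x in M. (\<integral>\<^sup>+ s\<in>{0..}. ennreal (max 0 (r s x)) \<partial>lborel) < \<infinity>)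
         \<or> (AE x in M. Inf {ereal t | t. 0 \<le> t \<and> 0 \<le> \<gamma> t x - r t x} < \<infinity>)"
    and V: "value_os M G r (default_time \<gamma> E) < \<infinity>"
    and S: "optimal_stopping M G r (default_time \<gamma> E) S"
  shows "AE x in M. tau x \<le> S x"
proof -
  have Sst: "stopping_time_inf M G S" using S unfolding optimal_stopping_def by simp
  show "AE x in M. tau x \<le> S x"
    using AE_space good_AE[OF C] key_lemma[OF C V S]
  proof eventually_elim
    case (elim x)
    then have x: "x \<in> space M" by simp
    have S0: "0 \<le> S x" using Sst x unfolding stopping_time_inf_def by auto
    show ?case
    proof (rule ccontr)
      assume "\<not> tau x \<le> S x"
      then have "S x < tauf (pz r x) (pz \<gamma> x)" by (simp add: tau_eq)
      then have "Wx x (S x) < Wx x (tauf (pz r x) (pz \<gamma> x))"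
        using pathw.PW2[OF pathw_x[OF x]] elim S0 by blast
      then have "exp_ext (Wx x (S x)) < exp_ext (Wx x (tau x))" unfolding tau_eq by (rule exp_ext_strict)
      then show False using elim by simp
    qed
  qed
qed

lemma uniq_lemma:
  assumes C: "(AE x in M. (\<integral>\<^sup>+ s\<in>{0..}. ennreal (max 0 (r s x)) \<partial>lborel) < \<infinity>)
         \<or> (AE x in M. Inf {ereal t | t. 0 \<le> t \<and> 0 \<le> \<gamma> t x - r t x} < \<infinity>)"
    and V: "value_os M G r (default_time \<gamma> E) < \<infinity>"
    and sm: "\<forall>x\<in>space M. strict_mono_on {0..} (\<lambda>t. \<gamma> t x - r t x)"
    and S: "optimal_stopping M G r (default_time \<gamma> E) S"
  shows "AE x in M. S x = tau x"
proof -
  have Sst: "stopping_time_inf M G S" using S unfolding optimal_stopping_def by simp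
  show ?thesis
    using AE_space key_lemma[OF C V S] min_lemma[OF C V S]
  proof eventually_elim
    case (elim x)
    then have x: "x \<in> space M" by simp
    have smx: "strict_mono_on {0..} (\<lambda>t. pz \<gamma> x t - pz r x t)"
      using sm x by (auto simp: strict_mono_on_def pz_def)
    show ?case
    proof (rule ccontr)
      assume "S x \<noteq> tau x"
      then have "tauf (pz r x) (pz \<gamma> x) < S x" using elim by (simp add: tau_eq)
      then have "Wx x (S x) < Wx x (tauf (pz r x) (pz \<gamma> x))"
        using pathw.PW3[OF pathw_x[OF x] smx] by blast
      then have "exp_ext (Wx x (S x)) < exp_ext (Wx x (tau x))" unfolding tau_eq by (rule exp_ext_strict)
      then show False using elim by simp
    qed
  qed
qed

lemma main:
  assumes C: "(AE x in M. (\<integral>\<^sup>+ s\<in>{0..}. ennreal (max 0 (r s x)) \<partial>lborel) < \<infinity>)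
         \<or> (AE x in M. Inf {ereal t | t. 0 \<le> t \<and> 0 \<le> \<gamma> t x - r t x} < \<infinity>)"
  shows "stopping_time_inf M G tau
     \<and> optimal_stopping M G r (default_time \<gamma> E) tau
     \<and> (value_os M G r (default_time \<gamma> E) < \<infinity> \<longrightarrow>
          (\<forall>S. optimal_stopping M G r (default_time \<gamma> E) S \<longrightarrow>
               (AE x in M. tau x \<le> S x))
        \<and> ((\<forall>x\<in>space M. strict_mono_on {0..} (\<lambda>t. \<gamma> t x - r t x)) \<longrightarrow>
             (\<forall>S. optimal_stopping M G r (default_time \<gamma> E) S \<longrightarrow>
               (AE x in M. S x = tau x))))"
proof (intro conjI impI allI)
  show "stopping_time_inf M G tau" by (rule tau_stop)
  show opt: "optimal_stopping M G r (default_time \<gamma> E) tau"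
    unfolding optimal_stopping_def using tau_stop payoff_le[OF C] by blast
next
  fix S assume "value_os M G r (default_time \<gamma> E) < \<infinity>" "optimal_stopping M G r (default_time \<gamma> E) S"
  then show "AE x in M. tau x \<le> S x" by (rule min_lemma[OF C])
next
  fix S assume "value_os M G r (default_time \<gamma> E) < \<infinity>"
    "\<forall>x\<in>space M. strict_mono_on {0..} (\<lambda>t. \<gamma> t x - r t x)"
    "optimal_stopping M G r (default_time \<gamma> E) S"
  then show "AE x in M. S x = tau x" by (rule uniq_lemma[OF C])
qed

end


theorem lemma2p1:
  fixes M :: "'a measure" and G :: "real \<Rightarrow> 'a measure"
    and E :: "'a \<Rightarrow> real" and r \<gamma> :: "real \<Rightarrow> 'a \<Rightarrow> real"
  assumes "prob_space M"
    and "right_cont_filtration M G"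
    and "distributed M lborel E (exponential_density 1)"
    and "prob_space.indep_set M {E -` B \<inter> space M | B. B \<in> sets borel} (Ginf M G)"
    and "progressive G r" and "loc_int_pathwise M r"
    and "progressive G \<gamma>" and "loc_int_pathwise M \<gamma>"
    and "\<forall>x\<in>space M. \<forall>t\<ge>0. 0 \<le> \<gamma> t x"
    and "\<forall>x\<in>space M. mono_on {0..} (\<lambda>t. \<gamma> t x - r t x)"
    and "(AE x in M. (\<integral>\<^sup>+ s\<in>{0..}. ennreal (max 0 (r s x)) \<partial>lborel) < \<infinity>)
         \<or> (AE x in M. Inf {ereal t | t. 0 \<le> t \<and> 0 \<le> \<gamma> t x - r t x} < \<infinity>)"
  shows "stopping_time_inf M G (\<lambda>x. Inf {ereal t | t. 0 \<le> t \<and> 0 \<le> \<gamma> t x - r t x})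
     \<and> optimal_stopping M G r (default_time \<gamma> E) (\<lambda>x. Inf {ereal t | t. 0 \<le> t \<and> 0 \<le> \<gamma> t x - r t x})
     \<and> (value_os M G r (default_time \<gamma> E) < \<infinity> \<longrightarrow>
          (\<forall>S. optimal_stopping M G r (default_time \<gamma> E) S \<longrightarrow>
               (AE x in M. Inf {ereal t | t. 0 \<le> t \<and> 0 \<le> \<gamma> t x - r t x} \<le> S x))
        \<and> ((\<forall>x\<in>space M. strict_mono_on {0..} (\<lambda>t. \<gamma> t x - r t x)) \<longrightarrow>
             (\<forall>S. optimal_stopping M G r (default_time \<gamma> E) S \<longrightarrow>
               (AE x in M. S x = Inf {ereal t | t. 0 \<le> t \<and> 0 \<le> \<gamma> t x - r t x}))))"
proof -
  have "setting M G E r \<gamma>"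
    unfolding setting_def setting_axioms_def using assms(1-10) by blast
  then interpret setting M G E r \<gamma> .
  have tau_fun: "tau = (\<lambda>x. Inf {ereal t | t. 0 \<le> t \<and> 0 \<le> \<gamma> t x - r t x})"
    by (rule ext) (simp add: tau_def)
  show ?thesis using main[OF assms(11)] unfolding tau_fun .
qed

end
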